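(* Let $u_l<u_r$ and let $v_l,v_r,w_l,w_r,z_l,z_r\in\mathbb{R}$. For $0<\epsilon<1$ define on $\mathbb{R}\times(0,\infty)$ the piecewise smooth function $U^\epsilon=(u_\epsilon,v_\epsilon,w_\epsilon,z_\epsilon)$ by $$U^\epsilon(x,t)=\begin{cases}(u_l,v_l,w_l,z_l), & x<(u_l-\epsilon)t,\\ \big(u_l,0,\frac{v_l^2}{2\epsilon},\frac{v_lw_l}{\epsilon}\big), & (u_l-\epsilon)t<x<u_lt,\\ \big(\frac{x}{t},0,0,0\big), & u_lt<x<u_rt,\\ \big(u_r,0,-\frac{v_r^2}{2\epsilon},-\frac{v_rw_r}{\epsilon}\big), & u_rt<x<(u_r+\epsilon)t,\\ (u_r,v_r,w_r,z_r), & x>(u_r+\epsilon)t.\end{cases}$$ Then, as $\epsilon\to0$, each of $\partial_tu_\epsilon+\partial_x(u_\epsilon^2/2)$, $\partial_tv_\epsilon+\partial_x(u_\epsilon v_\epsilon)$, $\partial_tw_\epsilon+\partial_x(v_\epsilon^2/2+u_\epsilon w_\epsilon)$, $\partial_tz_\epsilon+\partial_x(v_\epsilon w_\epsilon+u_\epsilon z_\epsilon)$ tends to $0$ in $\mathcal{D}'(\mathbb{R}\times(0,\infty))$, and $U^\epsilon\to(u,v,w,z)$ in $\mathcal{D}'(\mathbb{R}\times(0,\infty))$, where $u=u_l$ for $x<u_lt$, $u=x/t$ for $u_lt<x<u_rt$, $u=u_r$ for $x>u_rt$; $v=v_l$ for $x<u_lt$, $v=0$ for $u_lt<x<u_rt$,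 $v=v_r$ for $x>u_rt$; and $$w=w_lH(u_lt-x)+w_rH(x-u_rt)+\tfrac{v_l^2}{2}t\,\delta_{x=u_lt}-\tfrac{v_r^2}{2}t\,\delta_{x=u_rt},$$ $$z=z_lH(u_lt-x)+z_rH(x-u_rt)+v_lw_l t\,\delta_{x=u_lt}-v_rw_r t\,\delta_{x=u_rt}.$$ Thus $(u,v,w,z)$ is a shadow wave solution of the system $u_t+(u^2/2)_x=0$, $v_t+(uv)_x=0$, $w_t+(v^2/2+uw)_x=0$, $z_t+(vw+uz)_x=0$ with Riemann data $(u_l,v_l,w_l,z_l)$ for $x<0$, $(u_r,v_r,w_r,z_r)$ for $x>0$. Moreover it is entropy admissible: for every pair $\eta(u,v,w,z)=\bar\eta(u)+c_1v+c_2w+c_3z$, $q(u,v,w,z)=\bar q(u)+c_1uv+c_2(\frac{v^2}{2}+uw)+c_3(vw+uz)$ with $\bar\eta$ smooth convex, $\bar q'(u)=u\bar\eta'(u)$ and $c_1,c_2,c_3\in\mathbb{R}$, one has $\liminf_{\epsilon\to0}\int_0^\infty\!\int_{\mathbb{R}}\big(\eta(U^\epsilon)\phi_t+q(U^\epsilon)\phi_x\big)\,dx\,dt\ge0$ for every nonnegative $\phi\in C_c^\infty(\mathbb{R}\times(0,\infty))$. *)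

theory Defs
  imports "HOL-Analysis.Analysis"
begin

text \<open>Functions of two variables are written curried: f x t.
  C-infinity is defined coinductively: f is Frechet differentiable everywhere
  with partial derivatives fx, ft which are again C-infinity.\<close>

coinductive C_inf2 :: "(real \<Rightarrow> real \<Rightarrow> real) \<Rightarrow> bool" where
  "\<lbrakk>\<And>x t. ((\<lambda>p. f (fst p) (snd p)) has_derivative
            (\<lambda>h. fst h * fx x t + snd h * ft x t)) (at (x, t));
    C_inf2 fx; C_inf2 ft\<rbrakk> \<Longrightarrow> C_inf2 f"

definition tsupport2 :: "(real \<Rightarrow> real \<Rightarrow> real) \<Rightarrow> (real \<times> real) set" where
  "tsupport2 \<phi> = closure {(x, t). \<phi> x t \<noteq> 0}"

definition test_fun :: "(real \<Rightarrow> real \<Rightarrow> real) \<Rightarrow> bool" where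
  "test_fun \<phi> \<longleftrightarrow> C_inf2 \<phi> \<and> compact (tsupport2 \<phi>) \<and> tsupport2 \<phi> \<subseteq> UNIV \<times> {0<..}"

definition px :: "(real \<Rightarrow> real \<Rightarrow> real) \<Rightarrow> real \<Rightarrow> real \<Rightarrow> real" where
  "px \<phi> x t = deriv (\<lambda>y. \<phi> y t) x"

definition pt :: "(real \<Rightarrow> real \<Rightarrow> real) \<Rightarrow> real \<Rightarrow> real \<Rightarrow> real" where
  "pt \<phi> x t = deriv (\<lambda>s. \<phi> x s) t"

definition dint :: "(real \<Rightarrow> real \<Rightarrow> real) \<Rightarrow> real" where
  "dint F = (LINT t:{0<..}|lborel. (LINT x|lborel. F x t))"

text \<open>Action of the distribution  d_t f + d_x g  on phi.\<close>
definition div_pair :: "(real \<Rightarrow> real \<Rightarrow> real) \<Rightarrow> (real \<Rightarrow> real \<Rightarrow> real)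
                        \<Rightarrow> (real \<Rightarrow> real \<Rightarrow> real) \<Rightarrow> real" where
  "div_pair f g \<phi> = - dint (\<lambda>x t. f x t * pt \<phi> x t + g x t * px \<phi> x t)"

text \<open>Action of c(t) delta_{x = s t} on phi: int_0^oo c(t) phi(s t, t) dt.\<close>
definition delta_line :: "real \<Rightarrow> (real \<Rightarrow> real) \<Rightarrow> (real \<Rightarrow> real \<Rightarrow> real) \<Rightarrow> real" where
  "delta_line s c \<phi> = (LINT t:{0<..}|lborel. c t * \<phi> (s * t) t)"

definition heaviside :: "real \<Rightarrow> real" where
  "heaviside y = (if y > 0 then 1 else 0)"

definition C_inf1 :: "(real \<Rightarrow> real) \<Rightarrow> bool" where
  "C_inf1 f \<longleftrightarrow> (\<forall>n x. ((deriv ^^ n) f) differentiable (at x))"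

text \<open>Values on the (measure zero) interface lines are assigned to the region on the right.\<close>
definition Ueps :: "real \<Rightarrow> real \<Rightarrow> real \<Rightarrow> real \<Rightarrow> real \<Rightarrow> real \<Rightarrow> real \<Rightarrow> real \<Rightarrow> real
                    \<Rightarrow> real \<Rightarrow> real \<Rightarrow> real \<times> real \<times> real \<times> real" where
  "Ueps ul vl wl zl ur vr wr zr \<epsilon> x t =
     (if x < (ul - \<epsilon>) * t then (ul, vl, wl, zl)
      else if x < ul * t then (ul, 0, vl^2 / (2 * \<epsilon>), vl * wl / \<epsilon>)
      else if x < ur * t then (x / t, 0, 0, 0)
      else if x < (ur + \<epsilon>) * t then (ur, 0, - (vr^2 / (2 * \<epsilon>)), - (vr * wr / \<epsilon>))
      else (ur, vr, wr, zr))"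

definition c1 :: "'a \<times> 'b \<times> 'c \<times> 'd \<Rightarrow> 'a" where "c1 p = fst p"
definition c2 :: "'a \<times> 'b \<times> 'c \<times> 'd \<Rightarrow> 'b" where "c2 p = fst (snd p)"
definition c3 :: "'a \<times> 'b \<times> 'c \<times> 'd \<Rightarrow> 'c" where "c3 p = fst (snd (snd p))"
definition c4 :: "'a \<times> 'b \<times> 'c \<times> 'd \<Rightarrow> 'd" where "c4 p = snd (snd (snd p))"

end

theory Submission
  imports Defs
begin


lemma C_inf2_cont:
  assumes "C_inf2 f"
  shows "continuous_on UNIV (\<lambda>p. f (fst p) (snd p))"
proof -
  from assms obtain fx ft where d: "\<And>x t. ((\<lambda>p. f (fst p) (snd p)) has_derivative
            (\<lambda>h. fst h * fx x t + snd h * ft x t)) (at (x, t))"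
    by (cases rule: C_inf2.cases) blast
  show ?thesis
  proof (rule continuous_at_imp_continuous_on, rule ballI)
    fix p :: "real \<times> real"
    obtain x t where p: "p = (x, t)" by (cases p)
    show "isCont (\<lambda>p. f (fst p) (snd p)) p" unfolding p by (rule has_derivative_continuous[OF d])
  qed
qed

lemma leib:
  fixes K Kx :: "real \<Rightarrow> real \<Rightarrow> real"
  assumes d: "\<And>x t. ((\<lambda>x. K x t) has_real_derivative Kx x t) (at x)"
    and c: "\<And>x. continuous_on {a..b} (\<lambda>t. K x t)"
    and cx: "continuous_on UNIV (\<lambda>p. Kx (fst p) (snd p))"
  shows "((\<lambda>x. integral {a..b} (\<lambda>t. K x t)) has_real_derivative integral {a..b} (\<lambda>t. Kx s t)) (at s)"
proof -
  have "((\<lambda>x. integral (cbox a b) (\<lambda>t. K x t)) has_field_derivative integral (cbox a b) (\<lambda>t. Kx s t))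
      (at s within UNIV)"
  proof (rule leibniz_rule_field_derivative)
    fix x t :: real
    show "((\<lambda>x. K x t) has_field_derivative Kx x t) (at x within UNIV)" using d by simp
  next
    fix x :: real
    show "(\<lambda>t. K x t) integrable_on cbox a b"
      using c[of x] by (simp add: integrable_continuous_interval)
  next
    show "continuous_on (UNIV \<times> cbox a b) (\<lambda>(x, t). Kx x t)"
      using continuous_on_subset[OF cx subset_UNIV] by (simp add: split_beta)
  qed auto
  then show ?thesis by (simp add: cbox_interval)
qed

locale tf =
  fixes \<phi> fx ft :: "real \<Rightarrow> real \<Rightarrow> real" and M T0 T1 :: real
  assumes dphi: "\<And>x t. ((\<lambda>p. \<phi> (fst p) (snd p)) has_derivative
            (\<lambda>h. fst h * fx x t + snd h * ft x t)) (at (x, t))"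
    and cfx: "continuous_on UNIV (\<lambda>p. fx (fst p) (snd p))"
    and cft: "continuous_on UNIV (\<lambda>p. ft (fst p) (snd p))"
    and T0: "0 < T0" "T0 \<le> T1" and M: "0 \<le> M"
    and supp: "\<And>x t. \<not> (\<bar>x\<bar> \<le> M \<and> T0 \<le> t \<and> t \<le> T1) \<Longrightarrow> \<phi> x t = 0 \<and> fx x t = 0 \<and> ft x t = 0"
begin

lemma cphi: "continuous_on UNIV (\<lambda>p. \<phi> (fst p) (snd p))"
proof (rule continuous_at_imp_continuous_on, rule ballI)
  fix p :: "real \<times> real"
  obtain x t where p: "p = (x, t)" by (cases p)
  show "isCont (\<lambda>p. \<phi> (fst p) (snd p)) p" unfolding p by (rule has_derivative_continuous[OF dphi])
qed

lemma dx: "((\<lambda>y. \<phi> y t) has_real_derivative fx x t) (at x)"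
proof -
  have g: "((\<lambda>y. (y, t)) has_derivative (\<lambda>h. (h, 0))) (at x)"
    by (auto intro!: derivative_eq_intros)
  from has_derivative_compose[OF g dphi[of x t]] show ?thesis
    by (simp add: has_field_derivative_def mult_commute_abs)
qed

lemma dt: "((\<lambda>s. \<phi> x s) has_real_derivative ft x t) (at t)"
proof -
  have g: "((\<lambda>y. (x, y)) has_derivative (\<lambda>h. (0, h))) (at t)"
    by (auto intro!: derivative_eq_intros)
  from has_derivative_compose[OF g dphi[of x t]] show ?thesis
    by (simp add: has_field_derivative_def mult_commute_abs)
qed

lemma px_eq: "px \<phi> x t = fx x t"
  unfolding px_def by (rule DERIV_imp_deriv[OF dx])

lemma pt_eq: "pt \<phi> x t = ft x t"
  unfolding pt_def by (rule DERIV_imp_deriv[OF dt])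

lemma d_line: "((\<lambda>t. \<phi> (s * t) t) has_real_derivative (s * fx (s*t) t + ft (s*t) t)) (at t)"
proof -
  have g: "((\<lambda>y. (s*y, y)) has_derivative (\<lambda>h. (s*h, h))) (at t)"
    by (auto intro!: derivative_eq_intros)
  from has_derivative_compose[OF g dphi[of "s*t" t]]
  have "((\<lambda>y. \<phi> (s*y) y) has_derivative (\<lambda>h. h * (s * fx (s*t) t + ft (s*t) t))) (at t)"
    by (simp add: algebra_simps)
  then show ?thesis unfolding has_field_derivative_def mult_commute_abs .
qed

lemma d_line_s: "((\<lambda>s. \<phi> (s * t) t) has_real_derivative (t * fx (s*t) t)) (at s)"
proof -
  have g: "((\<lambda>y. (y*t, t)) has_derivative (\<lambda>h. (h*t, 0))) (at s)"
    by (auto intro!: derivative_eq_intros)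
  from has_derivative_compose[OF g dphi[of "s*t" t]]
  have "((\<lambda>y. \<phi> (y*t) t) has_derivative (\<lambda>h. h * (t * fx (s*t) t))) (at s)"
    by (simp add: algebra_simps)
  then show ?thesis unfolding has_field_derivative_def mult_commute_abs .
qed

lemma cont_comp:
  fixes K :: "real \<Rightarrow> real \<Rightarrow> real"
  assumes "continuous_on UNIV (\<lambda>p. K (fst p) (snd p))"
  shows "continuous_on UNIV (\<lambda>p. K (fst p * snd p) (snd p))"
proof -
  have "continuous_on UNIV (\<lambda>p::real\<times>real. (fst p * snd p, snd p))" by (intro continuous_intros)
  from continuous_on_compose2[OF assms this] show ?thesis by simp
qed

lemma cont_line:
  fixes K :: "real \<Rightarrow> real \<Rightarrow> real"
  assumes "continuous_on UNIV (\<lambda>p. K (fst p) (snd p))"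
  shows "continuous_on UNIV (\<lambda>t. K (s * t) t)"
proof -
  have "continuous_on UNIV (\<lambda>t::real. (s * t, t))" by (intro continuous_intros)
  from continuous_on_compose2[OF assms this] show ?thesis by simp
qed

definition ta :: real where "ta = T0 / 2"
definition tb :: real where "tb = T1 + 1"

lemma ta_tb: "0 < ta" "ta < T0" "T1 < tb" "ta < tb"
  using T0 by (auto simp: ta_def tb_def)

lemma conv:
  fixes g :: "real \<Rightarrow> real"
  assumes g: "continuous_on UNIV g" and z: "\<And>t. t \<notin> {T0..T1} \<Longrightarrow> g t = 0"
  shows "set_integrable lborel {0<..} g"
    and "(LINT t:{0<..}|lborel. g t) = integral {ta..tb} g"
proof -
  have si: "set_integrable lborel {ta..tb} g"
    unfolding set_integrable_def
    by (rule borel_integrable_compact) (auto intro: continuous_on_subset[OF g])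
  have eq: "\<And>t. indicator {0<..} t *\<^sub>R g t = indicator {ta..tb} t *\<^sub>R g t"
    using ta_tb z by (auto simp: indicator_def)
  show "set_integrable lborel {0<..} g"
    using si unfolding set_integrable_def eq .
  have "(LINT t:{0<..}|lborel. g t) = (LINT t:{ta..tb}|lborel. g t)"
    unfolding set_lebesgue_integral_def eq ..
  also have "\<dots> = integral {ta..tb} g"
    by (rule set_borel_integral_eq_integral(2)[OF si])
  finally show "(LINT t:{0<..}|lborel. g t) = integral {ta..tb} g" .
qed

definition S :: real where "S = M / T0"

lemma S_nonneg: "0 \<le> S" using M T0 by (simp add: S_def)

lemma supp_line:
  assumes "\<bar>s\<bar> > S"
  shows "\<phi> (s*t) t = 0 \<and> fx (s*t) t = 0 \<and> ft (s*t) t = 0"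
proof (rule supp, rule notI)
  assume h: "\<bar>s * t\<bar> \<le> M \<and> T0 \<le> t \<and> t \<le> T1"
  have "M < \<bar>s\<bar> * T0" using assms T0 by (simp add: S_def field_simps)
  also have "\<dots> \<le> \<bar>s\<bar> * t" using h by (intro mult_left_mono) auto
  also have "\<dots> = \<bar>s * t\<bar>" using h T0 by (simp add: abs_mult)
  finally show False using h by simp
qed

definition Psi where "Psi s = integral {ta..tb} (\<lambda>t. \<phi> (s*t) t)"
definition A where "A s = integral {ta..tb} (\<lambda>t. t * fx (s*t) t)"
definition B where "B s = integral {ta..tb} (\<lambda>t. t * ft (s*t) t)"
definition Psi1 where "Psi1 s = integral {ta..tb} (\<lambda>t. t * \<phi> (s*t) t)"

lemma Psi_zero: "\<bar>s\<bar> > S \<Longrightarrow> Psi s = 0" "\<bar>s\<bar> > S \<Longrightarrow> Psi1 s = 0"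
  "\<bar>s\<bar> > S \<Longrightarrow> A s = 0" "\<bar>s\<bar> > S \<Longrightarrow> B s = 0"
  by (simp_all add: Psi_def Psi1_def A_def B_def supp_line)

lemma Psi_deriv: "(Psi has_real_derivative A s) (at s)"
proof -
  have c1: "continuous_on UNIV (\<lambda>p::real\<times>real. snd p)" by (intro continuous_intros)
  have "((\<lambda>x. integral {ta..tb} (\<lambda>t. \<phi> (x*t) t)) has_real_derivative
     integral {ta..tb} (\<lambda>t. t * fx (s*t) t)) (at s)"
  proof (rule leib)
    show "continuous_on UNIV (\<lambda>p. snd p * fx (fst p * snd p) (snd p))"
      by (rule continuous_on_mult[OF c1 cont_comp[OF cfx]])
  qed (rule d_line_s, rule continuous_on_subset[OF cont_line[OF cphi] subset_UNIV])
  then show ?thesis by (simp add: Psi_def[abs_def] A_def)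
qed

lemma Psi1_deriv: "(Psi1 has_real_derivative integral {ta..tb} (\<lambda>t. t * (t * fx (s*t) t))) (at s)"
proof -
  have c1: "continuous_on UNIV (\<lambda>p::real\<times>real. snd p)" by (intro continuous_intros)
  have "((\<lambda>x. integral {ta..tb} (\<lambda>t. t * \<phi> (x*t) t)) has_real_derivative
     integral {ta..tb} (\<lambda>t. t * (t * fx (s*t) t))) (at s)"
  proof (rule leib)
    show "continuous_on UNIV (\<lambda>p. snd p * (snd p * fx (fst p * snd p) (snd p)))"
      by (rule continuous_on_mult[OF c1 continuous_on_mult[OF c1 cont_comp[OF cfx]]])
  next
    fix x t :: real
    show "((\<lambda>x. t * \<phi> (x * t) t) has_real_derivative t * (t * fx (x * t) t)) (at x)"
      using DERIV_cmult[OF d_line_s[of t x], of t] by simp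
  next
    fix x :: real
    show "continuous_on {ta..tb} (\<lambda>t. t * \<phi> (x * t) t)"
      by (rule continuous_on_mult[OF continuous_on_id continuous_on_subset[OF cont_line[OF cphi] subset_UNIV]])
  qed
  then show ?thesis by (simp add: Psi1_def[abs_def])
qed

lemma Psi_cont: "isCont Psi s"
  using Psi_deriv DERIV_isCont by blast
lemma Psi1_cont: "isCont Psi1 s"
  using Psi1_deriv DERIV_isCont by blast

lemma B_eq: "B s = - Psi s - s * A s"
proof -
  let ?h = "\<lambda>t. t * \<phi> (s*t) t"
  let ?h' = "\<lambda>t. \<phi> (s*t) t + s * (t * fx (s*t) t) + t * ft (s*t) t"
  have "(?h' has_integral (?h tb - ?h ta)) {ta..tb}"
  proof (rule fundamental_theorem_of_calculus)
    fix t assume "t \<in> {ta..tb}"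
    have "(?h has_real_derivative ?h' t) (at t)"
      using DERIV_mult[OF DERIV_ident d_line[of s t]] by (simp add: algebra_simps)
    then show "(?h has_vector_derivative ?h' t) (at t within {ta..tb})"
      by (simp add: has_real_derivative_iff_has_vector_derivative has_vector_derivative_at_within)
  qed (use ta_tb in auto)
  moreover have "?h tb = 0" "?h ta = 0" using supp ta_tb by auto
  ultimately have "integral {ta..tb} ?h' = 0" by (simp add: integral_unique)
  moreover have "integral {ta..tb} ?h' = Psi s + s * A s + B s"
  proof -
    have c: "continuous_on {ta..tb} (\<lambda>t. \<phi> (s*t) t)" "continuous_on {ta..tb} (\<lambda>t. fx (s*t) t)"
      "continuous_on {ta..tb} (\<lambda>t. ft (s*t) t)"
      by (auto intro: continuous_on_subset[OF cont_line[OF cphi]]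
          continuous_on_subset[OF cont_line[OF cfx]] continuous_on_subset[OF cont_line[OF cft]])
    have i: "(\<lambda>t. \<phi> (s*t) t) integrable_on {ta..tb}"
      "(\<lambda>t. s * (t * fx (s*t) t)) integrable_on {ta..tb}"
      "(\<lambda>t. t * ft (s*t) t) integrable_on {ta..tb}"
      "(\<lambda>t. t * fx (s*t) t) integrable_on {ta..tb}"
      using c by (auto intro!: integrable_continuous_interval continuous_intros)
    show ?thesis unfolding Psi_def A_def B_def
      by (simp add: integral_add i integrable_add)
  qed
  ultimately show ?thesis by linarith
qed

end



lemma Kbound:
  fixes K :: "real \<Rightarrow> real \<Rightarrow> real"
  assumes K: "continuous_on UNIV (\<lambda>p. K (fst p) (snd p))"
    and Kz: "\<And>x t. \<not> (\<bar>x\<bar> \<le> M \<and> T0 \<le> t \<and> t \<le> T1) \<Longrightarrow> K x t = 0"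
  shows "\<exists>B\<ge>0. \<forall>x t. \<bar>K x t\<bar> \<le> B"
proof -
  have "compact ((\<lambda>p. K (fst p) (snd p)) ` cbox (-M, T0) (M, T1))"
    by (rule compact_continuous_image) (auto intro: continuous_on_subset[OF K])
  then have "bounded ((\<lambda>p. K (fst p) (snd p)) ` cbox (-M, T0) (M, T1))" by (rule compact_imp_bounded)
  then obtain B where B: "\<And>y. y \<in> (\<lambda>p. K (fst p) (snd p)) ` cbox (-M, T0) (M, T1) \<Longrightarrow> norm y \<le> B"
    unfolding bounded_iff by blast
  have "\<bar>K x t\<bar> \<le> max B 0" for x t
  proof (cases "\<bar>x\<bar> \<le> M \<and> T0 \<le> t \<and> t \<le> T1")
    case True
    then have "(x, t) \<in> cbox (-M, T0) (M, T1)" by (auto simp: cbox_Pair_eq)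
    then have "\<bar>K x t\<bar> \<le> B" using B[of "K x t"] by force
    then show ?thesis by simp
  qed (simp add: Kz)
  then show ?thesis by (intro exI[of _ "max B 0"]) auto
qed

context tf begin

lemma line_out: "\<bar>s\<bar> > S \<Longrightarrow> \<not> (\<bar>s*t\<bar> \<le> M \<and> T0 \<le> t \<and> t \<le> T1)"
proof
  assume a: "\<bar>s\<bar> > S" and h: "\<bar>s * t\<bar> \<le> M \<and> T0 \<le> t \<and> t \<le> T1"
  have "M < \<bar>s\<bar> * T0" using a T0 by (simp add: S_def field_simps)
  also have "\<dots> \<le> \<bar>s\<bar> * t" using h by (intro mult_left_mono) auto
  also have "\<dots> = \<bar>s * t\<bar>" using h T0 by (simp add: abs_mult)
  finally show False using h by simp
qed

lemma sets_prod: "sets (lborel \<Otimes>\<^sub>M lborel) = sets (borel :: (real \<times> real) measure)"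
  unfolding lborel_prod by (rule sets_lborel)

lemma fubini:
  fixes f g :: "real \<Rightarrow> real" and K1 K2 :: "real \<Rightarrow> real \<Rightarrow> real"
  assumes fm[measurable]: "f \<in> borel_measurable borel" "g \<in> borel_measurable borel"
    and fb: "\<And>s. \<bar>f s\<bar> \<le> Cf" "\<And>s. \<bar>g s\<bar> \<le> Cg"
    and K: "continuous_on UNIV (\<lambda>p. K1 (fst p) (snd p))" "continuous_on UNIV (\<lambda>p. K2 (fst p) (snd p))"
    and Kz: "\<And>x t. \<not> (\<bar>x\<bar> \<le> M \<and> T0 \<le> t \<and> t \<le> T1) \<Longrightarrow> K1 x t = 0 \<and> K2 x t = 0"
  shows "(LINT t:{0<..}|lborel. (LINT s|lborel. t * (f s * K1 (s*t) t + g s * K2 (s*t) t)))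
      = (LINT s|lborel. f s * integral {ta..tb} (\<lambda>t. t * K1 (s*t) t) + g s * integral {ta..tb} (\<lambda>t. t * K2 (s*t) t))"
    and "integrable lborel (\<lambda>s. f s * integral {ta..tb} (\<lambda>t. t * K1 (s*t) t) + g s * integral {ta..tb} (\<lambda>t. t * K2 (s*t) t))"
proof -
  define H where "H = (\<lambda>p::real\<times>real. indicator {0<..} (snd p) *
      (snd p * (f (fst p) * K1 (fst p * snd p) (snd p) + g (fst p) * K2 (fst p * snd p) (snd p))))"
  have K1m: "(\<lambda>p. K1 (fst p * snd p) (snd p)) \<in> borel_measurable (lborel \<Otimes>\<^sub>M lborel)"
    unfolding measurable_cong_sets[OF sets_prod refl]
    by (rule borel_measurable_continuous_onI[OF cont_comp[OF K(1)]])
  have K2m: "(\<lambda>p. K2 (fst p * snd p) (snd p)) \<in> borel_measurable (lborel \<Otimes>\<^sub>M lborel)"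
    unfolding measurable_cong_sets[OF sets_prod refl]
    by (rule borel_measurable_continuous_onI[OF cont_comp[OF K(2)]])
  have Hm: "H \<in> borel_measurable (lborel \<Otimes>\<^sub>M lborel)"
    unfolding H_def using K1m K2m by measurable
  have "\<exists>B\<ge>0. \<forall>x t. \<bar>K1 x t\<bar> \<le> B" by (rule Kbound[OF K(1)]) (use Kz in blast)
  then obtain B1 where B1: "B1 \<ge> 0" "\<And>x t. \<bar>K1 x t\<bar> \<le> B1" by blast
  have "\<exists>B\<ge>0. \<forall>x t. \<bar>K2 x t\<bar> \<le> B" by (rule Kbound[OF K(2)]) (use Kz in blast)
  then obtain B2 where B2: "B2 \<ge> 0" "\<And>x t. \<bar>K2 x t\<bar> \<le> B2" by blast
  have Cf: "Cf \<ge> 0" using fb(1)[of 0] by linarith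
  have Cg: "Cg \<ge> 0" using fb(2)[of 0] by linarith
  define C where "C = T1 * (Cf * B1 + Cg * B2)"
  define box where "box = cbox (-S, T0) (S, T1)"
  have Hb: "norm (H p) \<le> norm (C * indicator box p)" for p
  proof (cases "p \<in> box")
    case False
    obtain s t where p: "p = (s, t)" by fastforce
    have "\<not> (\<bar>s\<bar> \<le> S \<and> T0 \<le> t \<and> t \<le> T1)" using False by (auto simp: p box_def cbox_Pair_eq)
    then have "\<not> (\<bar>s*t\<bar> \<le> M \<and> T0 \<le> t \<and> t \<le> T1)" using line_out[of s t] by auto
    then show ?thesis using Kz by (simp add: H_def p)
  next
    case True
    obtain s t where p: "p = (s, t)" by fastforce
    have t: "T0 \<le> t" "t \<le> T1" using True by (auto simp: p box_def cbox_Pair_eq)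
    have "\<bar>f s * K1 (s*t) t + g s * K2 (s*t) t\<bar> \<le> Cf * B1 + Cg * B2"
    proof -
      have "\<bar>f s * K1 (s*t) t\<bar> \<le> Cf * B1"
        unfolding abs_mult by (intro mult_mono fb B1) (use Cf in auto)
      moreover have "\<bar>g s * K2 (s*t) t\<bar> \<le> Cg * B2"
        unfolding abs_mult by (intro mult_mono fb B2) (use Cg in auto)
      ultimately show ?thesis by linarith
    qed
    then have "\<bar>t * (f s * K1 (s*t) t + g s * K2 (s*t) t)\<bar> \<le> T1 * (Cf * B1 + Cg * B2)"
      unfolding abs_mult using t T0 by (intro mult_mono) auto
    then show ?thesis using True T0 t Cf Cg B1 B2 by (simp add: H_def p C_def indicator_def)
  qed
  have boxs: "box \<in> sets (lborel \<Otimes>\<^sub>M lborel)"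
    unfolding sets_prod box_def by simp
  have boxm: "emeasure (lborel \<Otimes>\<^sub>M lborel) box < \<infinity>"
    unfolding lborel_prod box_def by (rule emeasure_lborel_cbox_finite)
  have intH: "integrable (lborel \<Otimes>\<^sub>M lborel) H"
  proof -
    have "integrable (lborel \<Otimes>\<^sub>M lborel) (\<lambda>p. C * indicator box p)"
      by (intro integrable_mult_right integrable_real_indicator boxs boxm)
    then show ?thesis by (rule Bochner_Integration.integrable_bound[OF _ Hm AE_I2[OF Hb]])
  qed
  have inner: "(LINT t|lborel. H (s, t)) = f s * integral {ta..tb} (\<lambda>t. t * K1 (s*t) t) + g s * integral {ta..tb} (\<lambda>t. t * K2 (s*t) t)" for s
  proof -
    have c1: "continuous_on UNIV (\<lambda>t. K1 (s*t) t)" "continuous_on UNIV (\<lambda>t. K2 (s*t) t)"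
      by (rule cont_line[OF K(1)], rule cont_line[OF K(2)])
    have c: "continuous_on UNIV (\<lambda>t. t * (f s * K1 (s*t) t + g s * K2 (s*t) t))"
      by (intro continuous_intros c1)
    have "(LINT t|lborel. H (s, t)) = (LINT t:{0<..}|lborel. t * (f s * K1 (s*t) t + g s * K2 (s*t) t))"
      by (simp add: H_def set_lebesgue_integral_def)
    also have "\<dots> = integral {ta..tb} (\<lambda>t. t * (f s * K1 (s*t) t + g s * K2 (s*t) t))"
      by (rule conv(2)[OF c]) (use Kz in auto)
    also have "\<dots> = f s * integral {ta..tb} (\<lambda>t. t * K1 (s*t) t) + g s * integral {ta..tb} (\<lambda>t. t * K2 (s*t) t)"
    proof -
      have i: "(\<lambda>t. t * K1 (s*t) t) integrable_on {ta..tb}" "(\<lambda>t. t * K2 (s*t) t) integrable_on {ta..tb}"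
        by (auto intro!: integrable_continuous_interval continuous_intros continuous_on_subset[OF c1(1)]
            continuous_on_subset[OF c1(2)])
      have "(\<lambda>t. t * (f s * K1 (s*t) t + g s * K2 (s*t) t)) = (\<lambda>t. f s * (t * K1 (s*t) t) + g s * (t * K2 (s*t) t))"
        by (auto simp: algebra_simps)
      then show ?thesis using i by (simp add: integral_add integrable_on_mult_right)
    qed
    finally show ?thesis .
  qed
  have "(LINT t:{0<..}|lborel. (LINT s|lborel. t * (f s * K1 (s*t) t + g s * K2 (s*t) t)))
      = (LINT t|lborel. (LINT s|lborel. H (s, t)))"
    by (simp add: set_lebesgue_integral_def H_def)
  also have "\<dots> = (LINT s|lborel. (LINT t|lborel. H (s, t)))"
    using lborel_pair.Fubini_integral[of "\<lambda>s t. H (s, t)"] intH by simp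
  also have "\<dots> = (LINT s|lborel. f s * integral {ta..tb} (\<lambda>t. t * K1 (s*t) t) + g s * integral {ta..tb} (\<lambda>t. t * K2 (s*t) t))"
    by (simp add: inner)
  finally show "(LINT t:{0<..}|lborel. (LINT s|lborel. t * (f s * K1 (s*t) t + g s * K2 (s*t) t)))
      = (LINT s|lborel. f s * integral {ta..tb} (\<lambda>t. t * K1 (s*t) t) + g s * integral {ta..tb} (\<lambda>t. t * K2 (s*t) t))" .
  show "integrable lborel (\<lambda>s. f s * integral {ta..tb} (\<lambda>t. t * K1 (s*t) t) + g s * integral {ta..tb} (\<lambda>t. t * K2 (s*t) t))"
    using lborel_pair.integrable_fst'[OF intH] by (simp add: inner)
qed

end



lemma pw5:
  fixes P p0 p1 p2 p3 p4 :: "real \<Rightarrow> real"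
  assumes o: "a0 \<le> a1" "a1 \<le> a2" "a2 \<le> a3" "a3 \<le> a4" "a4 \<le> a5"
    and h0: "(p0 has_integral I0) {a0..a1}" and h1: "(p1 has_integral I1) {a1..a2}"
    and h2: "(p2 has_integral I2) {a2..a3}" and h3: "(p3 has_integral I3) {a3..a4}"
    and h4: "(p4 has_integral I4) {a4..a5}"
    and P: "\<And>s. s \<notin> {a1, a2, a3, a4} \<Longrightarrow> P s = (if s < a1 then p0 s else if s < a2 then p1 s
        else if s < a3 then p2 s else if s < a4 then p3 s else p4 s)"
  shows "(P has_integral (I0 + I1 + I2 + I3 + I4)) {a0..a5}"
proof -
  let ?F = "{a1, a2, a3, a4}"
  have f: "finite ?F" by simp
  have q0: "(P has_integral I0) {a0..a1}"
    by (rule has_integral_spike_finite[OF f _ h0]) (use o P in auto)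
  have q1: "(P has_integral I1) {a1..a2}"
    by (rule has_integral_spike_finite[OF f _ h1]) (use o P in auto)
  have q2: "(P has_integral I2) {a2..a3}"
    by (rule has_integral_spike_finite[OF f _ h2]) (use o P in auto)
  have q3: "(P has_integral I3) {a3..a4}"
    by (rule has_integral_spike_finite[OF f _ h3]) (use o P in auto)
  have q4: "(P has_integral I4) {a4..a5}"
    by (rule has_integral_spike_finite[OF f _ h4]) (use o P in auto)
  have r1: "(P has_integral (I0 + I1)) {a0..a2}" by (rule has_integral_combine[OF _ _ q0 q1]) (use o in auto)
  have r2: "(P has_integral (I0 + I1 + I2)) {a0..a3}" by (rule has_integral_combine[OF _ _ r1 q2]) (use o in auto)
  have r3: "(P has_integral (I0 + I1 + I2 + I3)) {a0..a4}" by (rule has_integral_combine[OF _ _ r2 q3]) (use o in auto)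
  show ?thesis by (rule has_integral_combine[OF _ _ r3 q4]) (use o in auto)
qed

lemma piece_ftc:
  fixes r e Psi A :: "real \<Rightarrow> real"
  assumes "a \<le> b" and r: "\<And>s. (r has_real_derivative - e s) (at s)"
    and P: "\<And>s. (Psi has_real_derivative A s) (at s)"
  shows "((\<lambda>s. - e s * Psi s + r s * A s) has_integral (r b * Psi b - r a * Psi a)) {a..b}"
proof (rule fundamental_theorem_of_calculus[OF assms(1)])
  fix s assume "s \<in> {a..b}"
  have "((\<lambda>s. r s * Psi s) has_real_derivative (- e s * Psi s + r s * A s)) (at s)"
    using DERIV_mult[OF r P] by (simp add: algebra_simps)
  then show "((\<lambda>s. r s * Psi s) has_vector_derivative (- e s * Psi s + r s * A s)) (at s within {a..b})"
    by (simp add: has_real_derivative_iff_has_vector_derivative has_vector_derivative_at_within)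
qed

lemma piece_const:
  fixes Psi1 :: "real \<Rightarrow> real"
  assumes c: "continuous_on UNIV Psi1" and "a0 \<le> a" "a \<le> b"
  shows "((\<lambda>s. k * Psi1 s) has_integral k * (integral {a0..b} Psi1 - integral {a0..a} Psi1)) {a..b}"
proof -
  have i: "Psi1 integrable_on {a0..b}" by (rule integrable_continuous_interval) (auto intro: continuous_on_subset[OF c])
  have "integral {a0..a} Psi1 + integral {a..b} Psi1 = integral {a0..b} Psi1"
    by (rule Henstock_Kurzweil_Integration.integral_combine) (use assms i in auto)
  then have eq: "integral {a0..b} Psi1 - integral {a0..a} Psi1 = integral {a..b} Psi1" by simp
  have "(Psi1 has_integral integral {a..b} Psi1) {a..b}"
    by (rule integrable_integral, rule integrable_continuous_interval) (auto intro: continuous_on_subset[OF c])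
  then show ?thesis unfolding eq by (rule has_integral_mult_right)
qed

lemma lint_hk:
  fixes P :: "real \<Rightarrow> real"
  assumes "integrable lborel P" and z: "\<And>s. s \<notin> {a..b} \<Longrightarrow> P s = 0"
  shows "(LINT s|lborel. P s) = integral {a..b} P"
proof -
  have eq: "(\<lambda>s. indicator {a..b} s *\<^sub>R P s) = P"
  proof
    fix s show "indicator {a..b} s *\<^sub>R P s = P s" by (cases "s \<in> {a..b}") (auto simp: z)
  qed
  have si: "set_integrable lborel {a..b} P"
    unfolding set_integrable_def eq by fact
  have "(LINT s|lborel. P s) = (LINT s:{a..b}|lborel. P s)"
    unfolding set_lebesgue_integral_def eq ..
  also have "\<dots> = integral {a..b} P" by (rule set_borel_integral_eq_integral(2)[OF si])
  finally show ?thesis .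
qed

lemma dint_cong:
  assumes "\<And>x t. t > 0 \<Longrightarrow> F x t = G x t"
  shows "dint F = dint G"
  unfolding dint_def by (rule set_lebesgue_integral_cong) (use assms in auto)

context tf begin

lemma reduce:
  fixes f g :: "real \<Rightarrow> real" and F :: "real \<Rightarrow> real \<Rightarrow> real"
  assumes fm: "f \<in> borel_measurable borel" "g \<in> borel_measurable borel"
    and fb: "\<And>s. \<bar>f s\<bar> \<le> Cf" "\<And>s. \<bar>g s\<bar> \<le> Cg"
    and F: "\<And>x t. t > 0 \<Longrightarrow> F x t = f (x/t) * pt \<phi> x t + g (x/t) * px \<phi> x t"
  shows "dint F = (LINT s|lborel. f s * B s + g s * A s)"
    and "integrable lborel (\<lambda>s. f s * B s + g s * A s)"
proof -
  have inner: "(LINT x|lborel. F x t) = (LINT s|lborel. t * (f s * ft (s*t) t + g s * fx (s*t) t))"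
    if t: "t > 0" for t
  proof -
    have "(LINT x|lborel. F x t) = abs t * (LINT y|lborel. F (t * y) t)"
      using lborel_integral_real_affine[of t "\<lambda>x. F x t" 0] t by simp
    also have "\<dots> = t * (LINT s|lborel. f s * ft (s*t) t + g s * fx (s*t) t)"
      using t by (simp add: F pt_eq px_eq ac_simps)
    also have "\<dots> = (LINT s|lborel. t * (f s * ft (s*t) t + g s * fx (s*t) t))"
      by simp
    finally show ?thesis .
  qed
  have Kz: "\<And>x t. \<not> (\<bar>x\<bar> \<le> M \<and> T0 \<le> t \<and> t \<le> T1) \<Longrightarrow> ft x t = 0 \<and> fx x t = 0"
    using supp by blast
  note fu = fubini[OF fm fb cft cfx Kz]
  have "dint F = (LINT t:{0<..}|lborel. (LINT s|lborel. t * (f s * ft (s*t) t + g s * fx (s*t) t)))"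
    unfolding dint_def by (rule set_lebesgue_integral_cong) (auto simp: inner)
  also have "\<dots> = (LINT s|lborel. f s * B s + g s * A s)"
    using fu(1) by (simp add: A_def B_def)
  finally show "dint F = (LINT s|lborel. f s * B s + g s * A s)" .
  show "integrable lborel (\<lambda>s. f s * B s + g s * A s)"
    using fu(2) by (simp add: A_def B_def)
qed

lemma reduce0:
  fixes f :: "real \<Rightarrow> real" and F :: "real \<Rightarrow> real \<Rightarrow> real"
  assumes fm: "f \<in> borel_measurable borel"
    and fb: "\<And>s. \<bar>f s\<bar> \<le> Cf"
    and F: "\<And>x t. t > 0 \<Longrightarrow> F x t = f (x/t) * \<phi> x t"
  shows "dint F = (LINT s|lborel. f s * Psi1 s)"
    and "integrable lborel (\<lambda>s. f s * Psi1 s)"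
proof -
  have inner: "(LINT x|lborel. F x t) = (LINT s|lborel. t * (f s * \<phi> (s*t) t + (\<lambda>s. 0) s * (\<lambda>x t. 0) (s*t) t))"
    if t: "t > 0" for t
  proof -
    have "(LINT x|lborel. F x t) = abs t * (LINT y|lborel. F (t * y) t)"
      using lborel_integral_real_affine[of t "\<lambda>x. F x t" 0] t by simp
    also have "\<dots> = t * (LINT s|lborel. f s * \<phi> (s*t) t)"
      using t by (simp add: F ac_simps)
    also have "\<dots> = (LINT s|lborel. t * (f s * \<phi> (s*t) t + (\<lambda>s. 0) s * (\<lambda>x t. 0) (s*t) t))"
      by simp
    finally show ?thesis .
  qed
  have Kz: "\<And>x t. \<not> (\<bar>x\<bar> \<le> M \<and> T0 \<le> t \<and> t \<le> T1) \<Longrightarrow> \<phi> x t = 0 \<and> (\<lambda>x t. 0::real) x t = 0"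
    using supp by blast
  have g0: "(\<lambda>s. 0::real) \<in> borel_measurable borel" "\<And>s. \<bar>(\<lambda>s. 0::real) s\<bar> \<le> 0" by auto
  have c0: "continuous_on UNIV (\<lambda>p. (\<lambda>x t. 0::real) (fst p) (snd p))" by simp
  note fu = fubini[OF fm g0(1) fb g0(2) cphi c0 Kz]
  have "dint F = (LINT t:{0<..}|lborel. (LINT s|lborel. t * (f s * \<phi> (s*t) t + (\<lambda>s. 0) s * (\<lambda>x t. 0) (s*t) t)))"
    unfolding dint_def by (rule set_lebesgue_integral_cong) (auto simp: inner)
  also have "\<dots> = (LINT s|lborel. f s * Psi1 s)"
    using fu(1) by (simp add: Psi1_def)
  finally show "dint F = (LINT s|lborel. f s * Psi1 s)" .
  show "integrable lborel (\<lambda>s. f s * Psi1 s)"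
    using fu(2) by (simp add: Psi1_def)
qed

lemma delta_eq: "delta_line c (\<lambda>t. C * t) \<phi> = C * Psi1 c"
proof -
  have cl: "continuous_on UNIV (\<lambda>t. \<phi> (c*t) t)" by (rule cont_line[OF cphi])
  have "delta_line c (\<lambda>t. C * t) \<phi> = (LINT t:{0<..}|lborel. C * (t * \<phi> (c * t) t))"
    by (simp add: delta_line_def mult.assoc)
  also have "\<dots> = integral {ta..tb} (\<lambda>t. C * (t * \<phi> (c * t) t))"
    by (rule conv(2)) (auto intro!: continuous_intros cl simp: supp)
  also have "\<dots> = C * Psi1 c" by (simp add: Psi1_def)
  finally show ?thesis .
qed

end



lemma U_scale:
  assumes "t > 0"
  shows "Ueps ul vl wl zl ur vr wr zr \<epsilon> x t = Ueps ul vl wl zl ur vr wr zr \<epsilon> (x/t) 1"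
  using assms by (simp add: Ueps_def pos_divide_less_eq)

context tf begin

lemma ent_dint:
  fixes \<eta>b qb \<eta>' :: "real \<Rightarrow> real" and ul vl wl zl ur vr wr zr ka kb kc \<epsilon> :: real
  assumes \<eta>d: "\<And>y. (\<eta>b has_real_derivative \<eta>' y) (at y)"
    and qd: "\<And>y. (qb has_real_derivative y * \<eta>' y) (at y)"
    and \<epsilon>: "0 < \<epsilon>" "\<epsilon> < 1" and u: "ul < ur"
  defines "U \<equiv> Ueps ul vl wl zl ur vr wr zr"
    and "Ef \<equiv> \<lambda>p. \<eta>b (c1 p) + ka * c2 p + kb * c3 p + kc * c4 p"
    and "Qf \<equiv> \<lambda>p. qb (c1 p) + ka * c1 p * c2 p + kb * (c2 p ^ 2 / 2 + c1 p * c3 p)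
               + kc * (c2 p * c3 p + c1 p * c4 p)"
  shows "dint (\<lambda>x t. Ef (U \<epsilon> x t) * pt \<phi> x t + Qf (U \<epsilon> x t) * px \<phi> x t)
     = \<epsilon> * (ka * vl + kb * wl + kc * zl) * Psi (ul - \<epsilon>) + \<epsilon> * (ka * vr + kb * wr + kc * zr) * Psi (ur + \<epsilon>)"
proof -
  define F0 where "F0 = Ef (ul, vl, wl, zl)"
  define G0 where "G0 = Qf (ul, vl, wl, zl)"
  define F1 where "F1 = Ef (ul, 0, vl^2 / (2 * \<epsilon>), vl * wl / \<epsilon>)"
  define G1 where "G1 = Qf (ul, 0, vl^2 / (2 * \<epsilon>), vl * wl / \<epsilon>)"
  define F3 where "F3 = Ef (ur, 0, - (vr^2 / (2 * \<epsilon>)), - (vr * wr / \<epsilon>))"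
  define G3 where "G3 = Qf (ur, 0, - (vr^2 / (2 * \<epsilon>)), - (vr * wr / \<epsilon>))"
  define F4 where "F4 = Ef (ur, vr, wr, zr)"
  define G4 where "G4 = Qf (ur, vr, wr, zr)"
  define f where "f s = (if s < ul - \<epsilon> then F0 else if s < ul then F1 else if s < ur then \<eta>b s
      else if s < ur + \<epsilon> then F3 else F4)" for s
  define g where "g s = (if s < ul - \<epsilon> then G0 else if s < ul then G1 else if s < ur then qb s
      else if s < ur + \<epsilon> then G3 else G4)" for s
  have EU: "Ef (Ueps ul vl wl zl ur vr wr zr \<epsilon> s 1) = f s" for s
    by (simp add: Ueps_def f_def F0_def F1_def F3_def F4_def Ef_def c1_def c2_def c3_def c4_def)
  have QU: "Qf (Ueps ul vl wl zl ur vr wr zr \<epsilon> s 1) = g s" for s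
    by (simp add: Ueps_def g_def G0_def G1_def G3_def G4_def Qf_def c1_def c2_def c3_def c4_def)
  have F: "\<And>x t. t > 0 \<Longrightarrow> Ef (U \<epsilon> x t) * pt \<phi> x t + Qf (U \<epsilon> x t) * px \<phi> x t
      = f (x/t) * pt \<phi> x t + g (x/t) * px \<phi> x t"
  proof -
    fix x t :: real assume t: "t > 0"
    have "U \<epsilon> x t = Ueps ul vl wl zl ur vr wr zr \<epsilon> (x/t) 1"
      unfolding U_def by (rule U_scale[OF t])
    then show "Ef (U \<epsilon> x t) * pt \<phi> x t + Qf (U \<epsilon> x t) * px \<phi> x t
      = f (x/t) * pt \<phi> x t + g (x/t) * px \<phi> x t" by (simp only: EU QU)
  qed
  have \<eta>c: "continuous_on UNIV \<eta>b"
    using \<eta>d by (blast intro: continuous_at_imp_continuous_on DERIV_isCont)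
  have qc: "continuous_on UNIV qb"
    using qd by (blast intro: continuous_at_imp_continuous_on DERIV_isCont)
  have [measurable]: "\<eta>b \<in> borel_measurable borel" "qb \<in> borel_measurable borel"
    by (rule borel_measurable_continuous_onI[OF \<eta>c], rule borel_measurable_continuous_onI[OF qc])
  have fm: "f \<in> borel_measurable borel" unfolding f_def by measurable
  have gm: "g \<in> borel_measurable borel" unfolding g_def by measurable
  obtain B\<eta> where B\<eta>: "\<forall>s\<in>{ul..ur}. \<bar>\<eta>b s\<bar> \<le> B\<eta>"
    using compact_imp_bounded[OF compact_continuous_image[OF continuous_on_subset[OF \<eta>c subset_UNIV]
          compact_Icc[of ul ur]]]
    by (auto simp: bounded_iff)
  obtain Bq where Bq: "\<forall>s\<in>{ul..ur}. \<bar>qb s\<bar> \<le> Bq"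
    using compact_imp_bounded[OF compact_continuous_image[OF continuous_on_subset[OF qc subset_UNIV]
          compact_Icc[of ul ur]]]
    by (auto simp: bounded_iff)
  have fb: "\<bar>f s\<bar> \<le> \<bar>F0\<bar> + \<bar>F1\<bar> + \<bar>B\<eta>\<bar> + \<bar>F3\<bar> + \<bar>F4\<bar>" for s
  proof -
    have "ul \<le> s \<Longrightarrow> s \<le> ur \<Longrightarrow> \<bar>\<eta>b s\<bar> \<le> \<bar>B\<eta>\<bar>" using B\<eta> by force
    then show ?thesis using \<epsilon> unfolding f_def by auto
  qed
  have gb: "\<bar>g s\<bar> \<le> \<bar>G0\<bar> + \<bar>G1\<bar> + \<bar>Bq\<bar> + \<bar>G3\<bar> + \<bar>G4\<bar>" for s
  proof -
    have "ul \<le> s \<Longrightarrow> s \<le> ur \<Longrightarrow> \<bar>qb s\<bar> \<le> \<bar>Bq\<bar>" using Bq by force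
    then show ?thesis using \<epsilon> unfolding g_def by auto
  qed
  note red = reduce[OF fm gm fb gb F]
  define R where "R = S + \<bar>ul\<bar> + \<bar>ur\<bar> + 2"
  have SR: "S < R" and R: "-R < ul - \<epsilon>" "ur + \<epsilon> < R" using \<epsilon> S_nonneg by (auto simp: R_def)
  have Pz: "f s * B s + g s * A s = 0" if "s \<notin> {-R..R}" for s
  proof -
    have "\<bar>s\<bar> > S" using that SR by auto
    then show ?thesis by (simp add: Psi_zero)
  qed
  have PsiR: "Psi (-R) = 0" "Psi R = 0" using SR S_nonneg by (auto intro!: Psi_zero)
  define r0 where "r0 = (\<lambda>s. G0 - s * F0)"
  define r1 where "r1 = (\<lambda>s. G1 - s * F1)"
  define r2 where "r2 = (\<lambda>s. qb s - s * \<eta>b s)"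
  define r3 where "r3 = (\<lambda>s. G3 - s * F3)"
  define r4 where "r4 = (\<lambda>s. G4 - s * F4)"
  have d0: "(r0 has_real_derivative - F0) (at s)" for s unfolding r0_def by (auto intro!: derivative_eq_intros)
  have d1: "(r1 has_real_derivative - F1) (at s)" for s unfolding r1_def by (auto intro!: derivative_eq_intros)
  have d3: "(r3 has_real_derivative - F3) (at s)" for s unfolding r3_def by (auto intro!: derivative_eq_intros)
  have d4: "(r4 has_real_derivative - F4) (at s)" for s unfolding r4_def by (auto intro!: derivative_eq_intros)
  have d2: "(r2 has_real_derivative - \<eta>b s) (at s)" for s
    unfolding r2_def using DERIV_diff[OF qd DERIV_mult[OF DERIV_ident \<eta>d]] by simp
  have o: "-R \<le> ul - \<epsilon>" "ul - \<epsilon> \<le> ul" "ul \<le> ur" "ur \<le> ur + \<epsilon>" "ur + \<epsilon> \<le> R"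
    using R \<epsilon> u by auto
  note h0 = piece_ftc[OF o(1) d0 Psi_deriv]
  note h1 = piece_ftc[OF o(2) d1 Psi_deriv]
  note h2 = piece_ftc[OF o(3) d2 Psi_deriv]
  note h3 = piece_ftc[OF o(4) d3 Psi_deriv]
  note h4 = piece_ftc[OF o(5) d4 Psi_deriv]
  have Peq: "f s * B s + g s * A s = (if s < ul - \<epsilon> then - F0 * Psi s + r0 s * A s
      else if s < ul then - F1 * Psi s + r1 s * A s
      else if s < ur then - \<eta>b s * Psi s + r2 s * A s
      else if s < ur + \<epsilon> then - F3 * Psi s + r3 s * A s else - F4 * Psi s + r4 s * A s)" for s
    by (auto simp: B_eq f_def g_def r0_def r1_def r2_def r3_def r4_def algebra_simps)
  have HK: "((\<lambda>s. f s * B s + g s * A s) has_integral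
     ((r0 (ul - \<epsilon>) * Psi (ul - \<epsilon>) - r0 (-R) * Psi (-R)) + (r1 ul * Psi ul - r1 (ul - \<epsilon>) * Psi (ul - \<epsilon>))
      + (r2 ur * Psi ur - r2 ul * Psi ul) + (r3 (ur + \<epsilon>) * Psi (ur + \<epsilon>) - r3 ur * Psi ur)
      + (r4 R * Psi R - r4 (ur + \<epsilon>) * Psi (ur + \<epsilon>)))) {-R..R}"
    by (rule pw5[OF o h0 h1 h2 h3 h4]) (rule Peq)
  have j1: "r0 (ul - \<epsilon>) - r1 (ul - \<epsilon>) = \<epsilon> * (ka * vl + kb * wl + kc * zl)"
    using \<epsilon> by (simp add: r0_def r1_def G0_def F0_def G1_def F1_def Qf_def Ef_def c1_def c2_def c3_def c4_def
        field_simps power2_eq_square)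
  have j2: "r1 ul - r2 ul = 0"
    using \<epsilon> by (simp add: r1_def r2_def G1_def F1_def Qf_def Ef_def c1_def c2_def c3_def c4_def
        field_simps power2_eq_square)
  have j3: "r2 ur - r3 ur = 0"
    using \<epsilon> by (simp add: r2_def r3_def G3_def F3_def Qf_def Ef_def c1_def c2_def c3_def c4_def
        field_simps power2_eq_square)
  have j4: "r3 (ur + \<epsilon>) - r4 (ur + \<epsilon>) = \<epsilon> * (ka * vr + kb * wr + kc * zr)"
    using \<epsilon> by (simp add: r3_def r4_def G3_def F3_def G4_def F4_def Qf_def Ef_def c1_def c2_def c3_def c4_def
        field_simps power2_eq_square)
  have "dint (\<lambda>x t. Ef (U \<epsilon> x t) * pt \<phi> x t + Qf (U \<epsilon> x t) * px \<phi> x t)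
      = (LINT s|lborel. f s * B s + g s * A s)" by (rule red(1))
  also have "\<dots> = integral {-R..R} (\<lambda>s. f s * B s + g s * A s)"
    by (rule lint_hk[OF red(2)]) (use Pz in auto)
  also have "\<dots> = (r0 (ul - \<epsilon>) - r1 (ul - \<epsilon>)) * Psi (ul - \<epsilon>) + (r1 ul - r2 ul) * Psi ul
      + (r2 ur - r3 ur) * Psi ur + (r3 (ur + \<epsilon>) - r4 (ur + \<epsilon>)) * Psi (ur + \<epsilon>)"
    using integral_unique[OF HK] PsiR by (simp add: algebra_simps)
  also have "\<dots> = \<epsilon> * (ka * vl + kb * wl + kc * zl) * Psi (ul - \<epsilon>) + \<epsilon> * (ka * vr + kb * wr + kc * zr) * Psi (ur + \<epsilon>)"
    by (simp add: j1 j2 j3 j4)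
  finally show ?thesis .
qed

end



lemma dq_right:
  fixes G :: "real \<Rightarrow> real"
  assumes "(G has_real_derivative D) (at x)"
  shows "((\<lambda>\<epsilon>. (G (x + \<epsilon>) - G x) / \<epsilon>) \<longlongrightarrow> D) (at_right 0)"
  using assms unfolding DERIV_def by (rule tendsto_mono[rotated]) (simp add: at_le)

lemma dq_left:
  fixes G :: "real \<Rightarrow> real"
  assumes "(G has_real_derivative D) (at x)"
  shows "((\<lambda>\<epsilon>. (G x - G (x - \<epsilon>)) / \<epsilon>) \<longlongrightarrow> D) (at_right 0)"
proof -
  have "((\<lambda>h. (G (x + h) - G x) / h) \<longlongrightarrow> D) (at_left 0)"
    using assms unfolding DERIV_def by (rule tendsto_mono[rotated]) (simp add: at_le)
  then have "((\<lambda>h. (G (x + h) - G x) / h) \<longlongrightarrow> D) (filtermap (\<lambda>x. - x) (at_right 0))"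
    using at_left_minus[of "0::real"] by simp
  then have "((\<lambda>\<epsilon>. (G (x + - \<epsilon>) - G x) / - \<epsilon>) \<longlongrightarrow> D) (at_right 0)"
    by (simp add: filterlim_filtermap)
  moreover have "(\<lambda>\<epsilon>. (G (x + - \<epsilon>) - G x) / - \<epsilon>) = (\<lambda>\<epsilon>. (G x - G (x - \<epsilon>)) / \<epsilon>)"
    by (rule ext) (simp add: minus_divide_left)
  ultimately show ?thesis by simp
qed

lemma casc_meas: "(\<lambda>s::real. if s < a1 then d0 else if s < a2 then d1 else if s < a3 then d2
   else if s < a4 then d3 else d4::real) \<in> borel_measurable borel"
  by measurable

lemma casc_bound: "\<bar>(if (s::real) < a1 then d0 else if s < a2 then d1 else if s < a3 then d2
   else if s < a4 then d3 else d4::real)\<bar> \<le> \<bar>d0\<bar> + \<bar>d1\<bar> + \<bar>d2\<bar> + \<bar>d3\<bar> + \<bar>d4\<bar>"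
  by auto

lemma ev01: "eventually (\<lambda>\<epsilon>::real. 0 < \<epsilon> \<and> \<epsilon> < 1) (at_right 0)"
  using eventually_at_right_real[of 0 "1::real"] by (auto elim: eventually_mono)

context tf begin

lemma G_deriv:
  assumes "-R < x" "x < R"
  shows "((\<lambda>u. integral {-R..u} Psi1) has_real_derivative Psi1 x) (at x)"
proof -
  have c: "continuous_on UNIV Psi1" using Psi1_cont by (simp add: continuous_at_imp_continuous_on)
  have "((\<lambda>u. integral {-R..u} Psi1) has_vector_derivative Psi1 x) (at x within {-R..R})"
    by (rule integral_has_vector_derivative) (use assms in \<open>auto intro: continuous_on_subset[OF c]\<close>)
  then show ?thesis
    using assms by (simp add: at_within_Icc_at has_real_derivative_iff_has_vector_derivative)
qed

lemma conv_pw: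
  fixes f :: "real \<Rightarrow> real" and F :: "real \<Rightarrow> real \<Rightarrow> real"
  assumes o: "-R \<le> a1" "a1 \<le> a2" "a2 \<le> a3" "a3 \<le> a4" "a4 \<le> R" and SR: "S \<le> R"
    and fm: "f \<in> borel_measurable borel" and fb: "\<And>s. \<bar>f s\<bar> \<le> Cf"
    and fc: "\<And>s. s \<notin> {a1, a2, a3, a4} \<Longrightarrow> f s = (if s < a1 then d0 else if s < a2 then d1
       else if s < a3 then d2 else if s < a4 then d3 else d4)"
    and F: "\<And>x t. t > 0 \<Longrightarrow> F x t = f (x/t) * \<phi> x t"
  shows "dint F = d0 * (integral {-R..a1} Psi1 - integral {-R..-R} Psi1)
     + d1 * (integral {-R..a2} Psi1 - integral {-R..a1} Psi1)
     + d2 * (integral {-R..a3} Psi1 - integral {-R..a2} Psi1)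
     + d3 * (integral {-R..a4} Psi1 - integral {-R..a3} Psi1)
     + d4 * (integral {-R..R} Psi1 - integral {-R..a4} Psi1)"
proof -
  note red = reduce0[OF fm fb F]
  have c: "continuous_on UNIV Psi1" using Psi1_cont by (simp add: continuous_at_imp_continuous_on)
  have R0: "-R \<le> -R" by simp
  note h0 = piece_const[OF c R0 o(1), of d0]
  note h1 = piece_const[OF c o(1) o(2), of d1]
  have o3: "-R \<le> a2" "-R \<le> a3" "-R \<le> a4" using o by auto
  note h2 = piece_const[OF c o3(1) o(3), of d2]
  note h3 = piece_const[OF c o3(2) o(4), of d3]
  note h4 = piece_const[OF c o3(3) o(5), of d4]
  have HK: "((\<lambda>s. f s * Psi1 s) has_integral (d0 * (integral {-R..a1} Psi1 - integral {-R..-R} Psi1)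
     + d1 * (integral {-R..a2} Psi1 - integral {-R..a1} Psi1)
     + d2 * (integral {-R..a3} Psi1 - integral {-R..a2} Psi1)
     + d3 * (integral {-R..a4} Psi1 - integral {-R..a3} Psi1)
     + d4 * (integral {-R..R} Psi1 - integral {-R..a4} Psi1))) {-R..R}"
    by (rule pw5[OF o h0 h1 h2 h3 h4]) (simp add: fc)
  have z: "f s * Psi1 s = 0" if "s \<notin> {-R..R}" for s
  proof -
    have "\<bar>s\<bar> > S" using that SR by auto
    then show ?thesis by (simp add: Psi_zero)
  qed
  have "dint F = (LINT s|lborel. f s * Psi1 s)" by (rule red(1))
  also have "\<dots> = integral {-R..R} (\<lambda>s. f s * Psi1 s)"
    by (rule lint_hk[OF red(2)]) (use z in auto)
  finally show ?thesis using integral_unique[OF HK] by simp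
qed

lemma conv_gen:
  fixes Fe :: "real \<Rightarrow> real \<Rightarrow> real \<Rightarrow> real" and Ft :: "real \<Rightarrow> real \<Rightarrow> real" and h :: "real \<Rightarrow> real"
  assumes u: "ul < ur"
    and Fe: "\<And>\<epsilon> x t. 0 < \<epsilon> \<Longrightarrow> t > 0 \<Longrightarrow> Fe \<epsilon> x t = (if x/t < ul - \<epsilon> then pa else if x/t < ul then qx / \<epsilon>
        else if x/t < ur then 0 else if x/t < ur + \<epsilon> then qy / \<epsilon> else pb) * \<phi> x t"
    and hm: "h \<in> borel_measurable borel" and hb: "\<And>s. \<bar>h s\<bar> \<le> Ch"
    and hc: "\<And>s. s \<notin> {ul, ur} \<Longrightarrow> h s = (if s < ul then pa else if s < ur then 0 else pb)"
    and Ft: "\<And>x t. t > 0 \<Longrightarrow> Ft x t = h (x/t) * \<phi> x t"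
  shows "((\<lambda>\<epsilon>. dint (Fe \<epsilon>)) \<longlongrightarrow> dint Ft + qx * Psi1 ul + qy * Psi1 ur) (at_right 0)"
proof -
  define R where "R = S + \<bar>ul\<bar> + \<bar>ur\<bar> + 2"
  define G where "G u = integral {-R..u} Psi1" for u
  have SR: "S \<le> R" using S_nonneg by (simp add: R_def)
  have Rl: "-R < ul" "ul < R" "-R < ur" "ur < R" using S_nonneg by (auto simp: R_def)
  have GD: "(G has_real_derivative Psi1 x) (at x)" if "-R < x" "x < R" for x
    unfolding G_def[abs_def] by (rule G_deriv[OF that])
  have Gc: "isCont G ul" "isCont G ur" using GD Rl DERIV_isCont by blast+
  have tgt: "dint Ft = pa * (G ul - G (-R)) + 0 * (G ul - G ul) + 0 * (G ur - G ul) + 0 * (G ur - G ur)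
      + pb * (G R - G ur)"
    unfolding G_def
    by (rule conv_pw[OF _ _ _ _ _ SR hm hb _ Ft]) (use Rl u hc in auto)
  have lhs: "dint (Fe \<epsilon>) = pa * (G (ul - \<epsilon>) - G (-R)) + qx / \<epsilon> * (G ul - G (ul - \<epsilon>))
      + 0 * (G ur - G ul) + qy / \<epsilon> * (G (ur + \<epsilon>) - G ur) + pb * (G R - G (ur + \<epsilon>))"
    if e: "0 < \<epsilon>" "\<epsilon> < 1" for \<epsilon>
    unfolding G_def
    by (rule conv_pw[OF _ _ _ _ _ SR casc_meas casc_bound _ Fe[OF e(1)]]) (use Rl u e S_nonneg abs_ge_minus_self[of ul] abs_ge_self[of ur] in \<open>auto simp: R_def\<close>)
  have lhs2: "dint (Fe \<epsilon>) = pa * (G (ul - \<epsilon>) - G (-R)) + qx * ((G ul - G (ul - \<epsilon>)) / \<epsilon>)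
      + qy * ((G (ur + \<epsilon>) - G ur) / \<epsilon>) + pb * (G R - G (ur + \<epsilon>))"
    if e: "0 < \<epsilon>" "\<epsilon> < 1" for \<epsilon>
    unfolding lhs[OF e] by simp
  have l1: "((\<lambda>\<epsilon>. G (ul - \<epsilon>)) \<longlongrightarrow> G ul) (at_right 0)"
    by (rule isCont_tendsto_compose[OF Gc(1)]) (auto intro!: tendsto_eq_intros)
  have l2: "((\<lambda>\<epsilon>. G (ur + \<epsilon>)) \<longlongrightarrow> G ur) (at_right 0)"
    by (rule isCont_tendsto_compose[OF Gc(2)]) (auto intro!: tendsto_eq_intros)
  have l3: "((\<lambda>\<epsilon>. (G ul - G (ul - \<epsilon>)) / \<epsilon>) \<longlongrightarrow> Psi1 ul) (at_right 0)"
    by (rule dq_left[OF GD]) (use Rl in auto)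
  have l4: "((\<lambda>\<epsilon>. (G (ur + \<epsilon>) - G ur) / \<epsilon>) \<longlongrightarrow> Psi1 ur) (at_right 0)"
    by (rule dq_right[OF GD]) (use Rl in auto)
  have "((\<lambda>\<epsilon>. pa * (G (ul - \<epsilon>) - G (-R)) + qx * ((G ul - G (ul - \<epsilon>)) / \<epsilon>)
      + qy * ((G (ur + \<epsilon>) - G ur) / \<epsilon>) + pb * (G R - G (ur + \<epsilon>))) \<longlongrightarrow>
      pa * (G ul - G (-R)) + qx * Psi1 ul + qy * Psi1 ur + pb * (G R - G ur)) (at_right 0)"
    by (intro tendsto_intros l1 l2 l3 l4)
  then have "((\<lambda>\<epsilon>. dint (Fe \<epsilon>)) \<longlongrightarrow> pa * (G ul - G (-R)) + qx * Psi1 ul + qy * Psi1 ur + pb * (G R - G ur)) (at_right 0)"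
    by (rule Lim_transform_eventually) (use ev01 lhs2 in \<open>auto elim: eventually_mono\<close>)
  then show ?thesis unfolding tgt by (simp add: algebra_simps)
qed

lemma lim_shape: "((\<lambda>\<epsilon>. \<epsilon> * C1 * Psi (ul - \<epsilon>) + \<epsilon> * C2 * Psi (ur + \<epsilon>)) \<longlongrightarrow> 0) (at_right 0)"
proof -
  have l1: "((\<lambda>\<epsilon>. Psi (ul - \<epsilon>)) \<longlongrightarrow> Psi ul) (at_right 0)"
    by (rule isCont_tendsto_compose[OF Psi_cont]) (auto intro!: tendsto_eq_intros)
  have l2: "((\<lambda>\<epsilon>. Psi (ur + \<epsilon>)) \<longlongrightarrow> Psi ur) (at_right 0)"
    by (rule isCont_tendsto_compose[OF Psi_cont]) (auto intro!: tendsto_eq_intros)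
  have "((\<lambda>\<epsilon>. \<epsilon> * C1 * Psi (ul - \<epsilon>) + \<epsilon> * C2 * Psi (ur + \<epsilon>)) \<longlongrightarrow> 0 * C1 * Psi ul + 0 * C2 * Psi ur) (at_right 0)"
    by (intro tendsto_intros l1 l2)
  then show ?thesis by simp
qed

end



lemma test_tf:
  assumes "test_fun \<phi>"
  obtains fx ft M T0 T1 where "tf \<phi> fx ft M T0 T1"
proof -
  define Ks where "Ks = tsupport2 \<phi>"
  from assms have C: "C_inf2 \<phi>" and K: "compact Ks" "Ks \<subseteq> UNIV \<times> {0<..}"
    by (auto simp: test_fun_def Ks_def)
  from C obtain fx ft where dphi: "\<And>x t. ((\<lambda>p. \<phi> (fst p) (snd p)) has_derivative
            (\<lambda>h. fst h * fx x t + snd h * ft x t)) (at (x, t))" and Cfx: "C_inf2 fx" and Cft: "C_inf2 ft"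
    by (cases rule: C_inf2.cases) blast
  have phi0: "\<phi> x t = 0" if "(x, t) \<notin> Ks" for x t
    using that closure_subset[of "{(x, t). \<phi> x t \<noteq> 0}"] by (auto simp: Ks_def tsupport2_def)
  have d0: "fx x t = 0 \<and> ft x t = 0" if nk: "(x, t) \<notin> Ks" for x t
  proof -
    have op: "open (- Ks)" using compact_imp_closed[OF K(1)] by (simp add: open_Compl)
    have "((\<lambda>p. 0::real) has_derivative (\<lambda>h. fst h * fx x t + snd h * ft x t)) (at (x, t))"
      by (rule has_derivative_transform_within_open[OF dphi op]) (use nk phi0 in auto)
    moreover have "((\<lambda>p. 0::real) has_derivative (\<lambda>h. 0)) (at (x, t))" by simp
    ultimately have e: "(\<lambda>h. fst h * fx x t + snd h * ft x t) = (\<lambda>h. 0)" by (rule has_derivative_unique)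
    from fun_cong[OF e, of "(1, 0)"] fun_cong[OF e, of "(0, 1)"] show ?thesis by simp
  qed
  obtain B where B: "\<forall>p\<in>Ks. norm p \<le> B"
    using compact_imp_bounded[OF K(1)] by (auto simp: bounded_iff)
  have Bf: "\<bar>fst p\<bar> \<le> max B 0" "snd p \<le> max B 0" if "p \<in> Ks" for p
  proof -
    obtain a b where p: "p = (a, b)" by fastforce
    show "\<bar>fst p\<bar> \<le> max B 0" using norm_fst_le[of a b] B that by (fastforce simp: p)
    have "snd p \<le> norm (snd p)" by simp
    then show "snd p \<le> max B 0" using norm_snd_le[of b a] B that by (fastforce simp: p)
  qed
  obtain T0 where T0: "T0 > 0" "\<forall>p\<in>Ks. T0 \<le> snd p"
  proof (cases "Ks = {}")
    case True then show ?thesis using that[of 1] by auto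
  next
    case False
    obtain p0 where "p0 \<in> Ks" "\<forall>y\<in>Ks. snd p0 \<le> snd y"
      using continuous_attains_inf[OF K(1) False continuous_on_snd[OF continuous_on_id]] by auto
    moreover have "snd p0 > 0" using K(2) \<open>p0 \<in> Ks\<close> by auto
    ultimately show ?thesis using that[of "snd p0"] by auto
  qed
  define M where "M = max B 0"
  define T1 where "T1 = max M T0"
  have "tf \<phi> fx ft M T0 T1"
  proof
    show "\<And>x t. ((\<lambda>p. \<phi> (fst p) (snd p)) has_derivative (\<lambda>h. fst h * fx x t + snd h * ft x t)) (at (x, t))"
      by (rule dphi)
    show "continuous_on UNIV (\<lambda>p. fx (fst p) (snd p))" by (rule C_inf2_cont[OF Cfx])
    show "continuous_on UNIV (\<lambda>p. ft (fst p) (snd p))" by (rule C_inf2_cont[OF Cft])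
    show "0 < T0" by (rule T0(1))
    show "T0 \<le> T1" by (simp add: T1_def)
    show "0 \<le> M" by (simp add: M_def)
    fix x t assume h: "\<not> (\<bar>x\<bar> \<le> M \<and> T0 \<le> t \<and> t \<le> T1)"
    have "(x, t) \<notin> Ks"
    proof
      assume "(x, t) \<in> Ks"
      then have "\<bar>x\<bar> \<le> M" "t \<le> M" "T0 \<le> t" using Bf[of "(x, t)"] T0 by (auto simp: M_def)
      then show False using h by (auto simp: T1_def)
    qed
    then show "\<phi> x t = 0 \<and> fx x t = 0 \<and> ft x t = 0" using phi0 d0 by blast
  qed
  then show ?thesis by (rule that)
qed

context tf begin

lemma div_lim:
  assumes "\<And>\<epsilon>. 0 < \<epsilon> \<Longrightarrow> \<epsilon> < 1 \<Longrightarrow> div_pair (f \<epsilon>) (g \<epsilon>) \<phi> = - (\<epsilon> * Ca * Psi (ul - \<epsilon>) + \<epsilon> * Cb * Psi (ur + \<epsilon>))"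
  shows "((\<lambda>\<epsilon>. div_pair (f \<epsilon>) (g \<epsilon>) \<phi>) \<longlongrightarrow> 0) (at_right 0)"
proof -
  have "((\<lambda>\<epsilon>. - (\<epsilon> * Ca * Psi (ul - \<epsilon>) + \<epsilon> * Cb * Psi (ur + \<epsilon>))) \<longlongrightarrow> - 0) (at_right 0)"
    by (intro tendsto_minus lim_shape)
  then have "((\<lambda>\<epsilon>. - (\<epsilon> * Ca * Psi (ul - \<epsilon>) + \<epsilon> * Cb * Psi (ur + \<epsilon>))) \<longlongrightarrow> 0) (at_right 0)"
    by simp
  then show ?thesis
    by (rule Lim_transform_eventually) (use ev01 assms in \<open>auto elim: eventually_mono\<close>)
qed

lemma laws_part:
  fixes ul vl wl zl ur vr wr zr :: real
  assumes u: "ul < ur"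
  defines "U \<equiv> Ueps ul vl wl zl ur vr wr zr"
  shows "((\<lambda>\<epsilon>. div_pair (\<lambda>x t. c1 (U \<epsilon> x t)) (\<lambda>x t. c1 (U \<epsilon> x t)^2 / 2) \<phi>)
          \<longlongrightarrow> 0) (at_right 0)
     \<and> ((\<lambda>\<epsilon>. div_pair (\<lambda>x t. c2 (U \<epsilon> x t)) (\<lambda>x t. c1 (U \<epsilon> x t) * c2 (U \<epsilon> x t)) \<phi>)
          \<longlongrightarrow> 0) (at_right 0)
     \<and> ((\<lambda>\<epsilon>. div_pair (\<lambda>x t. c3 (U \<epsilon> x t))
             (\<lambda>x t. c2 (U \<epsilon> x t)^2 / 2 + c1 (U \<epsilon> x t) * c3 (U \<epsilon> x t)) \<phi>)
          \<longlongrightarrow> 0) (at_right 0)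
     \<and> ((\<lambda>\<epsilon>. div_pair (\<lambda>x t. c4 (U \<epsilon> x t))
             (\<lambda>x t. c2 (U \<epsilon> x t) * c3 (U \<epsilon> x t) + c1 (U \<epsilon> x t) * c4 (U \<epsilon> x t)) \<phi>)
          \<longlongrightarrow> 0) (at_right 0)"
proof -
  have d1: "\<And>y. ((\<lambda>y. y) has_real_derivative 1) (at y)" by simp
  have d2: "\<And>y. ((\<lambda>y::real. y^2 / 2) has_real_derivative y * 1) (at y)"
    by (auto intro!: derivative_eq_intros)
  have z1: "\<And>y. ((\<lambda>y::real. 0) has_real_derivative 0) (at y)" by simp
  have z2: "\<And>y. ((\<lambda>y::real. 0) has_real_derivative y * 0) (at y)" by simp
  have "((\<lambda>\<epsilon>. div_pair (\<lambda>x t. c1 (U \<epsilon> x t)) (\<lambda>x t. c1 (U \<epsilon> x t)^2 / 2) \<phi>)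
          \<longlongrightarrow> 0) (at_right 0)"
    by (rule div_lim[where Ca = 0 and Cb = 0])
      (use ent_dint[where \<eta>b = "\<lambda>y. y" and \<eta>' = "\<lambda>y. 1" and qb = "\<lambda>y. y^2 / 2" and ka = 0 and kb = 0 and kc = 0
        and ul = ul and ur = ur and vl = vl and wl = wl and zl = zl and vr = vr and wr = wr and zr = zr, OF d1 d2 _ _ u]
        in \<open>simp add: div_pair_def U_def\<close>)
  moreover have "((\<lambda>\<epsilon>. div_pair (\<lambda>x t. c2 (U \<epsilon> x t)) (\<lambda>x t. c1 (U \<epsilon> x t) * c2 (U \<epsilon> x t)) \<phi>)
          \<longlongrightarrow> 0) (at_right 0)"
    by (rule div_lim[where Ca = vl and Cb = vr])
      (use ent_dint[where \<eta>b = "\<lambda>y. 0" and \<eta>' = "\<lambda>y. 0" and qb = "\<lambda>y. 0" and ka = 1 and kb = 0 and kc = 0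
        and ul = ul and ur = ur and vl = vl and wl = wl and zl = zl and vr = vr and wr = wr and zr = zr, OF z1 z2 _ _ u]
        in \<open>simp add: div_pair_def U_def\<close>)
  moreover have "((\<lambda>\<epsilon>. div_pair (\<lambda>x t. c3 (U \<epsilon> x t))
             (\<lambda>x t. c2 (U \<epsilon> x t)^2 / 2 + c1 (U \<epsilon> x t) * c3 (U \<epsilon> x t)) \<phi>)
          \<longlongrightarrow> 0) (at_right 0)"
    by (rule div_lim[where Ca = wl and Cb = wr])
      (use ent_dint[where \<eta>b = "\<lambda>y. 0" and \<eta>' = "\<lambda>y. 0" and qb = "\<lambda>y. 0" and ka = 0 and kb = 1 and kc = 0
        and ul = ul and ur = ur and vl = vl and wl = wl and zl = zl and vr = vr and wr = wr and zr = zr, OF z1 z2 _ _ u]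
        in \<open>simp add: div_pair_def U_def\<close>)
  moreover have "((\<lambda>\<epsilon>. div_pair (\<lambda>x t. c4 (U \<epsilon> x t))
             (\<lambda>x t. c2 (U \<epsilon> x t) * c3 (U \<epsilon> x t) + c1 (U \<epsilon> x t) * c4 (U \<epsilon> x t)) \<phi>)
          \<longlongrightarrow> 0) (at_right 0)"
    by (rule div_lim[where Ca = zl and Cb = zr])
      (use ent_dint[where \<eta>b = "\<lambda>y. 0" and \<eta>' = "\<lambda>y. 0" and qb = "\<lambda>y. 0" and ka = 0 and kb = 0 and kc = 1
        and ul = ul and ur = ur and vl = vl and wl = wl and zl = zl and vr = vr and wr = wr and zr = zr, OF z1 z2 _ _ u]
        in \<open>simp add: div_pair_def U_def\<close>)
  ultimately show ?thesis by blast
qed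

end

lemma heav_scale:
  assumes t: "t > 0"
  shows "heaviside (a * t - x) = heaviside (a - x / t)" "heaviside (x - a * t) = heaviside (x / t - a)"
proof -
  have "x / t < a \<longleftrightarrow> x < a * t" by (rule pos_divide_less_eq[OF t])
  moreover have "a < x / t \<longleftrightarrow> a * t < x" by (rule pos_less_divide_eq[OF t])
  ultimately show "heaviside (a * t - x) = heaviside (a - x / t)" "heaviside (x - a * t) = heaviside (x / t - a)"
    by (auto simp: heaviside_def)
qed

context tf begin

lemma conv_part:
  fixes ul vl wl zl ur vr wr zr :: real
  assumes u: "ul < ur"
  defines "U \<equiv> Ueps ul vl wl zl ur vr wr zr"
  shows "((\<lambda>\<epsilon>. dint (\<lambda>x t. c1 (U \<epsilon> x t) * \<phi> x t)) \<longlongrightarrow>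
          dint (\<lambda>x t. (if x < ul * t then ul else if x < ur * t then x / t else ur) * \<phi> x t))
         (at_right 0)
     \<and> ((\<lambda>\<epsilon>. dint (\<lambda>x t. c2 (U \<epsilon> x t) * \<phi> x t)) \<longlongrightarrow>
          dint (\<lambda>x t. (if x < ul * t then vl else if x < ur * t then 0 else vr) * \<phi> x t))
         (at_right 0)
     \<and> ((\<lambda>\<epsilon>. dint (\<lambda>x t. c3 (U \<epsilon> x t) * \<phi> x t)) \<longlongrightarrow>
          dint (\<lambda>x t. (wl * heaviside (ul * t - x) + wr * heaviside (x - ur * t)) * \<phi> x t)
          + delta_line ul (\<lambda>t. vl^2 / 2 * t) \<phi> - delta_line ur (\<lambda>t. vr^2 / 2 * t) \<phi>)
         (at_right 0)
     \<and> ((\<lambda>\<epsilon>. dint (\<lambda>x t. c4 (U \<epsilon> x t) * \<phi> x t)) \<longlongrightarrow>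
          dint (\<lambda>x t. (zl * heaviside (ul * t - x) + zr * heaviside (x - ur * t)) * \<phi> x t)
          + delta_line ul (\<lambda>t. vl * wl * t) \<phi> - delta_line ur (\<lambda>t. vr * wr * t) \<phi>)
         (at_right 0)"
proof -
  have "((\<lambda>\<epsilon>. dint (\<lambda>x t. c1 (U \<epsilon> x t) * \<phi> x t)) \<longlongrightarrow>
          dint (\<lambda>x t. (if x < ul * t then ul else if x < ur * t then x / t else ur) * \<phi> x t))
         (at_right 0)"
  proof -
    have "eventually (\<lambda>\<epsilon>. dint (\<lambda>x t. (if x < ul * t then ul else if x < ur * t then x / t else ur) * \<phi> x t)
        = dint (\<lambda>x t. c1 (U \<epsilon> x t) * \<phi> x t)) (at_right 0)"
      using ev01
    proof (rule eventually_mono)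
      fix \<epsilon> :: real assume e: "0 < \<epsilon> \<and> \<epsilon> < 1"
      show "dint (\<lambda>x t. (if x < ul * t then ul else if x < ur * t then x / t else ur) * \<phi> x t)
        = dint (\<lambda>x t. c1 (U \<epsilon> x t) * \<phi> x t)"
      proof (rule dint_cong)
        fix x t :: real assume t: "t > 0"
        have e1: "(ul - \<epsilon>) * t < ul * t" "ur * t < (ur + \<epsilon>) * t" using e t by (auto simp: algebra_simps)
        show "(if x < ul * t then ul else if x < ur * t then x / t else ur) * \<phi> x t = c1 (U \<epsilon> x t) * \<phi> x t"
          using e1 by (auto simp: U_def Ueps_def c1_def)
      qed
    qed
    then show ?thesis by (rule Lim_transform_eventually[OF tendsto_const])
  qed
  moreover have "((\<lambda>\<epsilon>. dint (\<lambda>x t. c2 (U \<epsilon> x t) * \<phi> x t)) \<longlongrightarrow>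
          dint (\<lambda>x t. (if x < ul * t then vl else if x < ur * t then 0 else vr) * \<phi> x t))
         (at_right 0)"
  proof -
    have lim: "((\<lambda>\<epsilon>. dint (\<lambda>x t. c2 (U \<epsilon> x t) * \<phi> x t)) \<longlongrightarrow>
          dint (\<lambda>x t. (if x < ul * t then vl else if x < ur * t then 0 else vr) * \<phi> x t) + 0 * Psi1 ul + 0 * Psi1 ur)
         (at_right 0)"
    proof (rule conv_gen[where pa = vl and qx = 0 and qy = 0 and pb = vr and
          h = "\<lambda>s. if s < ul then vl else if s < ur then 0 else vr" and Ch = "\<bar>vl\<bar> + \<bar>vr\<bar>", OF u])
      fix \<epsilon> x t :: real assume e: "0 < \<epsilon>" and t: "0 < t"
      show "c2 (U \<epsilon> x t) * \<phi> x t = (if x / t < ul - \<epsilon> then vl else if x / t < ul then 0 / \<epsilon> else if x / t < ur then 0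
          else if x / t < ur + \<epsilon> then 0 / \<epsilon> else vr) * \<phi> x t"
        unfolding U_def U_scale[OF t] by (simp add: Ueps_def c2_def)
    next
      fix x t :: real assume t: "0 < t"
      show "(if x < ul * t then vl else if x < ur * t then 0 else vr) * \<phi> x t
        = (if x / t < ul then vl else if x / t < ur then 0 else vr) * \<phi> x t"
        using t by (simp add: pos_divide_less_eq)
    qed (auto intro: casc_meas)
    then show ?thesis by simp
  qed
  moreover have "((\<lambda>\<epsilon>. dint (\<lambda>x t. c3 (U \<epsilon> x t) * \<phi> x t)) \<longlongrightarrow>
          dint (\<lambda>x t. (wl * heaviside (ul * t - x) + wr * heaviside (x - ur * t)) * \<phi> x t)
          + delta_line ul (\<lambda>t. vl^2 / 2 * t) \<phi> - delta_line ur (\<lambda>t. vr^2 / 2 * t) \<phi>)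
         (at_right 0)"
  proof -
    have lim: "((\<lambda>\<epsilon>. dint (\<lambda>x t. c3 (U \<epsilon> x t) * \<phi> x t)) \<longlongrightarrow>
          dint (\<lambda>x t. (wl * heaviside (ul * t - x) + wr * heaviside (x - ur * t)) * \<phi> x t)
          + vl^2 / 2 * Psi1 ul + (- (vr^2 / 2)) * Psi1 ur) (at_right 0)"
    proof (rule conv_gen[where pa = wl and qx = "vl^2 / 2" and qy = "- (vr^2 / 2)" and pb = wr and
          h = "\<lambda>s. wl * heaviside (ul - s) + wr * heaviside (s - ur)" and Ch = "\<bar>wl\<bar> + \<bar>wr\<bar>", OF u])
      fix \<epsilon> x t :: real assume e: "0 < \<epsilon>" and t: "0 < t"
      show "c3 (U \<epsilon> x t) * \<phi> x t = (if x / t < ul - \<epsilon> then wl else if x / t < ul then vl^2 / 2 / \<epsilon> else if x / t < ur then 0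
          else if x / t < ur + \<epsilon> then - (vr^2 / 2) / \<epsilon> else wr) * \<phi> x t"
        unfolding U_def U_scale[OF t] by (simp add: Ueps_def c3_def)
    next
      fix x t :: real assume t: "0 < t"
      show "(wl * heaviside (ul * t - x) + wr * heaviside (x - ur * t)) * \<phi> x t
        = (wl * heaviside (ul - x / t) + wr * heaviside (x / t - ur)) * \<phi> x t"
        by (simp add: heav_scale[OF t])
    next
      show "(\<lambda>s. wl * heaviside (ul - s) + wr * heaviside (s - ur)) \<in> borel_measurable borel"
        unfolding heaviside_def by measurable
    next
      fix s :: real
      show "\<bar>wl * heaviside (ul - s) + wr * heaviside (s - ur)\<bar> \<le> \<bar>wl\<bar> + \<bar>wr\<bar>"
        by (auto simp: heaviside_def)
    next
      fix s :: real assume "s \<notin> {ul, ur}"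
      then show "wl * heaviside (ul - s) + wr * heaviside (s - ur) = (if s < ul then wl else if s < ur then 0 else wr)"
        using u by (auto simp: heaviside_def)
    qed
    then show ?thesis unfolding delta_eq by simp
  qed
  moreover have "((\<lambda>\<epsilon>. dint (\<lambda>x t. c4 (U \<epsilon> x t) * \<phi> x t)) \<longlongrightarrow>
          dint (\<lambda>x t. (zl * heaviside (ul * t - x) + zr * heaviside (x - ur * t)) * \<phi> x t)
          + delta_line ul (\<lambda>t. vl * wl * t) \<phi> - delta_line ur (\<lambda>t. vr * wr * t) \<phi>)
         (at_right 0)"
  proof -
    have lim: "((\<lambda>\<epsilon>. dint (\<lambda>x t. c4 (U \<epsilon> x t) * \<phi> x t)) \<longlongrightarrow>
          dint (\<lambda>x t. (zl * heaviside (ul * t - x) + zr * heaviside (x - ur * t)) * \<phi> x t)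
          + vl * wl * Psi1 ul + (- (vr * wr)) * Psi1 ur) (at_right 0)"
    proof (rule conv_gen[where pa = zl and qx = "vl * wl" and qy = "- (vr * wr)" and pb = zr and
          h = "\<lambda>s. zl * heaviside (ul - s) + zr * heaviside (s - ur)" and Ch = "\<bar>zl\<bar> + \<bar>zr\<bar>", OF u])
      fix \<epsilon> x t :: real assume e: "0 < \<epsilon>" and t: "0 < t"
      show "c4 (U \<epsilon> x t) * \<phi> x t = (if x / t < ul - \<epsilon> then zl else if x / t < ul then vl * wl / \<epsilon> else if x / t < ur then 0
          else if x / t < ur + \<epsilon> then - (vr * wr) / \<epsilon> else zr) * \<phi> x t"
        unfolding U_def U_scale[OF t] by (simp add: Ueps_def c4_def)
    next
      fix x t :: real assume t: "0 < t"
      show "(zl * heaviside (ul * t - x) + zr * heaviside (x - ur * t)) * \<phi> x t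
        = (zl * heaviside (ul - x / t) + zr * heaviside (x / t - ur)) * \<phi> x t"
        by (simp add: heav_scale[OF t])
    next
      show "(\<lambda>s. zl * heaviside (ul - s) + zr * heaviside (s - ur)) \<in> borel_measurable borel"
        unfolding heaviside_def by measurable
    next
      fix s :: real
      show "\<bar>zl * heaviside (ul - s) + zr * heaviside (s - ur)\<bar> \<le> \<bar>zl\<bar> + \<bar>zr\<bar>"
        by (auto simp: heaviside_def)
    next
      fix s :: real assume "s \<notin> {ul, ur}"
      then show "zl * heaviside (ul - s) + zr * heaviside (s - ur) = (if s < ul then zl else if s < ur then 0 else zr)"
        using u by (auto simp: heaviside_def)
    qed
    then show ?thesis unfolding delta_eq by simp
  qed
  ultimately show ?thesis by blast
qed

lemma ent_part:
  fixes ul vl wl zl ur vr wr zr :: real and \<eta>b qb :: "real \<Rightarrow> real" and k1 k2 k3 :: real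
  assumes u: "ul < ur" and C: "C_inf1 \<eta>b" and q: "\<forall>y. (qb has_real_derivative (y * deriv \<eta>b y)) (at y)"
  defines "U \<equiv> Ueps ul vl wl zl ur vr wr zr"
  shows "Liminf (at_right 0) (\<lambda>\<epsilon>. ereal (dint (\<lambda>x t.
             (let p = U \<epsilon> x t; u = c1 p; v = c2 p; w = c3 p; z = c4 p in
               (\<eta>b u + k1 * v + k2 * w + k3 * z) * pt \<phi> x t
               + (qb u + k1 * u * v + k2 * (v^2 / 2 + u * w) + k3 * (v * w + u * z)) * px \<phi> x t))))
            \<ge> 0"
proof -
  have \<eta>d: "(\<eta>b has_real_derivative deriv \<eta>b y) (at y)" for y
  proof -
    have "((deriv ^^ 0) \<eta>b) differentiable (at y)" using C by (simp only: C_inf1_def)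
    then show ?thesis by (simp add: DERIV_deriv_iff_real_differentiable)
  qed
  have qd: "(qb has_real_derivative y * deriv \<eta>b y) (at y)" for y using q by blast
  have eq: "dint (\<lambda>x t.
             (let p = U \<epsilon> x t; u = c1 p; v = c2 p; w = c3 p; z = c4 p in
               (\<eta>b u + k1 * v + k2 * w + k3 * z) * pt \<phi> x t
               + (qb u + k1 * u * v + k2 * (v^2 / 2 + u * w) + k3 * (v * w + u * z)) * px \<phi> x t))
      = \<epsilon> * (k1 * vl + k2 * wl + k3 * zl) * Psi (ul - \<epsilon>) + \<epsilon> * (k1 * vr + k2 * wr + k3 * zr) * Psi (ur + \<epsilon>)"
    if e: "0 < \<epsilon>" "\<epsilon> < 1" for \<epsilon>
    using ent_dint[where \<eta>b = \<eta>b and \<eta>' = "deriv \<eta>b" and qb = qb and ka = k1 and kb = k2 and kc = k3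
        and ul = ul and ur = ur and vl = vl and wl = wl and zl = zl and vr = vr and wr = wr and zr = zr,
        OF \<eta>d qd e u]
    by (simp add: Let_def U_def)
  have "((\<lambda>\<epsilon>. \<epsilon> * (k1 * vl + k2 * wl + k3 * zl) * Psi (ul - \<epsilon>) + \<epsilon> * (k1 * vr + k2 * wr + k3 * zr) * Psi (ur + \<epsilon>))
      \<longlongrightarrow> 0) (at_right 0)" by (rule lim_shape)
  then have "((\<lambda>\<epsilon>. dint (\<lambda>x t.
             (let p = U \<epsilon> x t; u = c1 p; v = c2 p; w = c3 p; z = c4 p in
               (\<eta>b u + k1 * v + k2 * w + k3 * z) * pt \<phi> x t
               + (qb u + k1 * u * v + k2 * (v^2 / 2 + u * w) + k3 * (v * w + u * z)) * px \<phi> x t)))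
      \<longlongrightarrow> 0) (at_right 0)"
    by (rule Lim_transform_eventually) (use ev01 eq in \<open>auto elim: eventually_mono\<close>)
  then have "((\<lambda>\<epsilon>. ereal (dint (\<lambda>x t.
             (let p = U \<epsilon> x t; u = c1 p; v = c2 p; w = c3 p; z = c4 p in
               (\<eta>b u + k1 * v + k2 * w + k3 * z) * pt \<phi> x t
               + (qb u + k1 * u * v + k2 * (v^2 / 2 + u * w) + k3 * (v * w + u * z)) * px \<phi> x t))))
      \<longlongrightarrow> ereal 0) (at_right 0)"
    by (simp only: lim_ereal)
  from lim_imp_Liminf[OF trivial_limit_at_right_real this] show ?thesis by (simp add: zero_ereal_def)
qed

end

theorem theorem5p3:
  fixes ul vl wl zl ur vr wr zr :: real
  assumes "ul < ur"
  defines "U \<equiv> Ueps ul vl wl zl ur vr wr zr"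
  shows
   \<comment> \<open>the four conservation laws are satisfied approximately\<close>
   "(\<forall>\<phi>. test_fun \<phi> \<longrightarrow>
       ((\<lambda>\<epsilon>. div_pair (\<lambda>x t. c1 (U \<epsilon> x t)) (\<lambda>x t. c1 (U \<epsilon> x t)^2 / 2) \<phi>)
          \<longlongrightarrow> 0) (at_right 0)
     \<and> ((\<lambda>\<epsilon>. div_pair (\<lambda>x t. c2 (U \<epsilon> x t)) (\<lambda>x t. c1 (U \<epsilon> x t) * c2 (U \<epsilon> x t)) \<phi>)
          \<longlongrightarrow> 0) (at_right 0)
     \<and> ((\<lambda>\<epsilon>. div_pair (\<lambda>x t. c3 (U \<epsilon> x t))
             (\<lambda>x t. c2 (U \<epsilon> x t)^2 / 2 + c1 (U \<epsilon> x t) * c3 (U \<epsilon> x t)) \<phi>)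
          \<longlongrightarrow> 0) (at_right 0)
     \<and> ((\<lambda>\<epsilon>. div_pair (\<lambda>x t. c4 (U \<epsilon> x t))
             (\<lambda>x t. c2 (U \<epsilon> x t) * c3 (U \<epsilon> x t) + c1 (U \<epsilon> x t) * c4 (U \<epsilon> x t)) \<phi>)
          \<longlongrightarrow> 0) (at_right 0))
   \<and> \<comment> \<open>distributional convergence U^eps -> (u,v,w,z)\<close>
   (\<forall>\<phi>. test_fun \<phi> \<longrightarrow>
       ((\<lambda>\<epsilon>. dint (\<lambda>x t. c1 (U \<epsilon> x t) * \<phi> x t)) \<longlongrightarrow>
          dint (\<lambda>x t. (if x < ul * t then ul else if x < ur * t then x / t else ur) * \<phi> x t))
         (at_right 0)
     \<and> ((\<lambda>\<epsilon>. dint (\<lambda>x t. c2 (U \<epsilon> x t) * \<phi> x t)) \<longlongrightarrow>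
          dint (\<lambda>x t. (if x < ul * t then vl else if x < ur * t then 0 else vr) * \<phi> x t))
         (at_right 0)
     \<and> ((\<lambda>\<epsilon>. dint (\<lambda>x t. c3 (U \<epsilon> x t) * \<phi> x t)) \<longlongrightarrow>
          dint (\<lambda>x t. (wl * heaviside (ul * t - x) + wr * heaviside (x - ur * t)) * \<phi> x t)
          + delta_line ul (\<lambda>t. vl^2 / 2 * t) \<phi> - delta_line ur (\<lambda>t. vr^2 / 2 * t) \<phi>)
         (at_right 0)
     \<and> ((\<lambda>\<epsilon>. dint (\<lambda>x t. c4 (U \<epsilon> x t) * \<phi> x t)) \<longlongrightarrow>
          dint (\<lambda>x t. (zl * heaviside (ul * t - x) + zr * heaviside (x - ur * t)) * \<phi> x t)
          + delta_line ul (\<lambda>t. vl * wl * t) \<phi> - delta_line ur (\<lambda>t. vr * wr * t) \<phi>)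
         (at_right 0))
   \<and> \<comment> \<open>entropy admissibility\<close>
   (\<forall>\<eta>b qb :: real \<Rightarrow> real. \<forall>k1 k2 k3 :: real.
       C_inf1 \<eta>b \<and> convex_on UNIV \<eta>b \<and>
       (\<forall>y. (qb has_real_derivative (y * deriv \<eta>b y)) (at y)) \<longrightarrow>
       (\<forall>\<phi>. test_fun \<phi> \<and> (\<forall>x t. \<phi> x t \<ge> 0) \<longrightarrow>
          Liminf (at_right 0) (\<lambda>\<epsilon>. ereal (dint (\<lambda>x t.
             (let p = U \<epsilon> x t; u = c1 p; v = c2 p; w = c3 p; z = c4 p in
               (\<eta>b u + k1 * v + k2 * w + k3 * z) * pt \<phi> x t
               + (qb u + k1 * u * v + k2 * (v^2 / 2 + u * w) + k3 * (v * w + u * z)) * px \<phi> x t))))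
            \<ge> 0))"

  unfolding U_def
  apply (intro conjI)
    apply (intro allI impI)
    apply (erule test_tf)
    apply (erule tf.laws_part[OF _ assms(1)])
   apply (intro allI impI)
   apply (erule test_tf)
   apply (erule tf.conv_part[OF _ assms(1)])
  apply (intro allI impI)
  apply (elim conjE)
  apply (erule test_tf)
  apply (erule tf.ent_part[OF _ assms(1)])
   apply assumption+
  done


end
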